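(* For problem (D) with $\Psi_\mu=\Psi_{0,\mu}$: (i) every stationary point of (D) is a local minimizer of $G$; (ii) if $w^*=[y^*;z^*]$ is a local minimizer of $G$ with $G(w^* )<\infty$ and the Slater condition $$\{w=[y;z]:\ -A^\top y-B^\top z\in\operatorname{ri}(\operatorname{dom}f^* ),\ y\in\operatorname{ri}(\operatorname{dom}g^* ),\ z_{\bar T_*}=0\}\neq\emptyset$$ holds, where $T_*=\{i:z^*_i\ne0\}$, $\bar T_*=[r]\setminus T_*$, and "$\operatorname{ri}$" may be omitted for $f^*$ (resp. $g^*$) when it is polyhedral, then $w^*$ is a stationary point of (D).
   Context: Let $f:\mathbb R^n\to(-\infty,\infty]$, $g:\mathbb R^m\to(-\infty,\infty]$ be proper, lsc and convex with conjugates $f^*,g^*$; $A\in\mathbb R^{m\times n}$, $B\in\mathbb R^{r\times n}$, $b\in\mathbb R^r$, $\mu\in\mathbb R^r$, $\mu>0$. For $w=[y;z]\in\mathbb R^m\times\mathbb R^r$: $\Xi(w)=f^*(-A^\top y-B^\top z)+g^*(y)+\langle b,z\rangle$, $\Psi_{0,\mu}(z)=\sum_i\mu_i\mathbf 1_{\{z_i\neq0\}}$, and (D) is $\min_w G(w)=\Xi(w)+\Psi_{0,\mu}(z)$. $\partial$ is the limiting subdifferential; $\partial\Psi_{0,\mu}(z)=\{u:u_i\in\mathbb R\text{ if }z_i=0,\ u_i=0\text{ otherwise}\}$. $w^*$ is a stationary point of (D) if there exist $x\in\partial f^*(-A^\top y^*-B^\top z^* )$, $v\in\partial g^*(y^*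 )$, $u\in\partial\Psi_{0,\mu}(z^* )$ with $Ax=v$ and $Bx=b+u$. $\operatorname{ri}$ denotes relative interior. *)

theory Defs
  imports "HOL-Analysis.Analysis" "HOL-Library.Extended_Real"
begin

definition epi :: "('a::euclidean_space \<Rightarrow> ereal) \<Rightarrow> ('a \<times> real) set" where
  "epi h = {(x, t). h x \<le> ereal t}"

definition edom :: "('a::euclidean_space \<Rightarrow> ereal) \<Rightarrow> 'a set" where
  "edom h = {x. h x < \<infinity>}"

definition proper_fun :: "('a::euclidean_space \<Rightarrow> ereal) \<Rightarrow> bool" where
  "proper_fun h \<longleftrightarrow> (\<forall>x. h x \<noteq> -\<infinity>) \<and> (\<exists>x. h x < \<infinity>)"

definition lsc_fun :: "('a::euclidean_space \<Rightarrow> ereal) \<Rightarrow> bool" where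
  "lsc_fun h \<longleftrightarrow> closed (epi h)"

definition convex_fun :: "('a::euclidean_space \<Rightarrow> ereal) \<Rightarrow> bool" where
  "convex_fun h \<longleftrightarrow> convex (epi h)"

definition polyhedral_fun :: "('a::euclidean_space \<Rightarrow> ereal) \<Rightarrow> bool" where
  "polyhedral_fun h \<longleftrightarrow> polyhedron (epi h)"

definition fconj :: "('a::euclidean_space \<Rightarrow> ereal) \<Rightarrow> 'a \<Rightarrow> ereal" where
  "fconj h y = (SUP x. ereal (inner x y) - h x)"

text \<open>Frechet (regular) subdifferential: h finite at x and
  liminf_{u -> x, u ~= x} (h u - h x - <v, u - x>) / |u - x| >= 0.\<close>
definition frechet_subdiff :: "('a::euclidean_space \<Rightarrow> ereal) \<Rightarrow> 'a \<Rightarrow> 'a set" where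
  "frechet_subdiff h x = {v. \<bar>h x\<bar> \<noteq> \<infinity> \<and>
     (\<forall>e>0. \<exists>d>0. \<forall>u. norm (u - x) < d \<longrightarrow>
        ereal (real_of_ereal (h x) + inner v (u - x) - e * norm (u - x)) \<le> h u)}"

definition limiting_subdiff :: "('a::euclidean_space \<Rightarrow> ereal) \<Rightarrow> 'a \<Rightarrow> 'a set" where
  "limiting_subdiff h x = {v. \<exists>xs vs. xs \<longlonglongrightarrow> x \<and> (\<lambda>k. h (xs k)) \<longlonglongrightarrow> h x \<and>
      (\<forall>k. vs k \<in> frechet_subdiff h (xs k)) \<and> vs \<longlonglongrightarrow> v}"

definition Psi0 :: "real^'r \<Rightarrow> real^'r \<Rightarrow> real" where
  "Psi0 \<mu> z = (\<Sum>i\<in>UNIV. \<mu> $ i * (if z $ i \<noteq> 0 then 1 else 0))"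

text \<open>The limiting subdifferential of Psi0 as given in the paper.\<close>
definition subdiff_Psi0 :: "real^'r \<Rightarrow> (real^'r) set" where
  "subdiff_Psi0 z = {u. \<forall>i. z $ i \<noteq> 0 \<longrightarrow> u $ i = 0}"

definition Xi :: "(real^'n \<Rightarrow> ereal) \<Rightarrow> (real^'m \<Rightarrow> ereal) \<Rightarrow> real^'n^'m \<Rightarrow> real^'n^'r
      \<Rightarrow> real^'r \<Rightarrow> (real^'m) \<times> (real^'r) \<Rightarrow> ereal" where
  "Xi f g A B b w = (case w of (y, z) \<Rightarrow>
     fconj f (- (transpose A *v y) - (transpose B *v z)) + fconj g y + ereal (inner b z))"

definition Gobj :: "(real^'n \<Rightarrow> ereal) \<Rightarrow> (real^'m \<Rightarrow> ereal) \<Rightarrow> real^'n^'m \<Rightarrow> real^'n^'r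
      \<Rightarrow> real^'r \<Rightarrow> real^'r \<Rightarrow> (real^'m) \<times> (real^'r) \<Rightarrow> ereal" where
  "Gobj f g A B b \<mu> w = Xi f g A B b w + ereal (Psi0 \<mu> (snd w))"

definition stationary_D :: "(real^'n \<Rightarrow> ereal) \<Rightarrow> (real^'m \<Rightarrow> ereal) \<Rightarrow> real^'n^'m \<Rightarrow> real^'n^'r
      \<Rightarrow> real^'r \<Rightarrow> (real^'m) \<times> (real^'r) \<Rightarrow> bool" where
  "stationary_D f g A B b w = (case w of (y, z) \<Rightarrow>
     (\<exists>x v u. x \<in> limiting_subdiff (fconj f) (- (transpose A *v y) - (transpose B *v z)) \<and>
              v \<in> limiting_subdiff (fconj g) y \<and> u \<in> subdiff_Psi0 z \<and>
              A *v x = v \<and> B *v x = b + u))"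

definition local_minimizer :: "('a::metric_space \<Rightarrow> ereal) \<Rightarrow> 'a \<Rightarrow> bool" where
  "local_minimizer h w \<longleftrightarrow> (\<exists>e>0. \<forall>w'. dist w' w < e \<longrightarrow> h w \<le> h w')"

definition slater_D :: "(real^'n \<Rightarrow> ereal) \<Rightarrow> (real^'m \<Rightarrow> ereal) \<Rightarrow> real^'n^'m \<Rightarrow> real^'n^'r
      \<Rightarrow> real^'r \<Rightarrow> bool" where
  "slater_D f g A B zs \<longleftrightarrow> (\<exists>y z.
     - (transpose A *v y) - (transpose B *v z) \<in>
        (if polyhedral_fun (fconj f) then edom (fconj f) else rel_interior (edom (fconj f))) \<and>
     y \<in> (if polyhedral_fun (fconj g) then edom (fconj g) else rel_interior (edom (fconj g))) \<and>
     (\<forall>i. zs $ i = 0 \<longrightarrow> z $ i = 0))"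

end

theory Submission
  imports Defs
begin

definition ncone :: "'a::euclidean_space set \<Rightarrow> 'a \<Rightarrow> 'a set" where
  "ncone P x = {n. \<forall>y\<in>P. n \<bullet> (y - x) \<le> 0}"

lemma convex_cone_ncone: "convex_cone (ncone P x)"
  unfolding convex_cone_def conic_def convex_def ncone_def
proof (intro conjI allI impI ballI)
  have "0 \<in> {n. \<forall>y\<in>P. n \<bullet> (y - (x::'a)) \<le> 0}" by simp
  then show "{n. \<forall>y\<in>P. n \<bullet> (y - x) \<le> 0} \<noteq> {}" by blast
next
  fix a b :: 'a and u v :: real
  assume a: "a \<in> {n. \<forall>y\<in>P. n \<bullet> (y - x) \<le> 0}" and b: "b \<in> {n. \<forall>y\<in>P. n \<bullet> (y - x) \<le> 0}"
    and u: "0 \<le> u" and v: "0 \<le> v" and "u + v = 1"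
  show "u *\<^sub>R a + v *\<^sub>R b \<in> {n. \<forall>y\<in>P. n \<bullet> (y - x) \<le> 0}"
  proof (clarsimp)
    fix y assume "y \<in> P"
    then have "a \<bullet> (y - x) \<le> 0" "b \<bullet> (y - x) \<le> 0" using a b by auto
    then have "u * (a \<bullet> (y - x)) + v * (b \<bullet> (y - x)) \<le> 0"
      using u v by (simp add: add_nonpos_nonpos mult_nonneg_nonpos)
    then show "(u *\<^sub>R a + v *\<^sub>R b) \<bullet> (y - x) \<le> 0" by (simp add: inner_add_left)
  qed
next
  fix a :: 'a and c :: real
  assume a: "a \<in> {n. \<forall>y\<in>P. n \<bullet> (y - x) \<le> 0}" and c: "0 \<le> c"
  show "c *\<^sub>R a \<in> {n. \<forall>y\<in>P. n \<bullet> (y - x) \<le> 0}"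
    using a c by (auto simp: mult_nonneg_nonpos)
qed

lemma ev_small:
  assumes "0 < r"
  shows "eventually (\<lambda>t. t * s < r) (at_right (0::real))"
proof -
  have "((\<lambda>t. t * s) \<longlongrightarrow> 0 * s) (at_right (0::real))"
    by (intro tendsto_intros)
  then show ?thesis using assms by (auto dest: order_tendstoD(2))
qed

lemma farkas_split:
  fixes P1 P2 :: "'a::euclidean_space set"
  assumes p1: "polyhedron P1" and p2: "polyhedron P2" and x1: "x \<in> P1" and x2: "x \<in> P2"
    and mn: "\<forall>y\<in>P1 \<inter> P2. g \<bullet> x \<le> g \<bullet> y"
  shows "\<exists>n1 n2. n1 \<in> ncone P1 x \<and> n2 \<in> ncone P2 x \<and> -g = n1 + n2"
proof -
  obtain F1 where F1: "finite F1" "P1 = \<Inter>F1" "\<forall>h\<in>F1. \<exists>a b. a \<noteq> 0 \<and> h = {x. a \<bullet> x \<le> b}"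
    using p1 unfolding polyhedron_def by blast
  obtain F2 where F2: "finite F2" "P2 = \<Inter>F2" "\<forall>h\<in>F2. \<exists>a b. a \<noteq> 0 \<and> h = {x. a \<bullet> x \<le> b}"
    using p2 unfolding polyhedron_def by blast
  define F where "F = F1 \<union> F2"
  define nrm where "nrm h = (SOME ab. h = {y. fst ab \<bullet> y \<le> snd ab})" for h :: "'a set"
  have nrm: "h = {y. fst (nrm h) \<bullet> y \<le> snd (nrm h)}" if "h \<in> F" for h
  proof -
    have "h \<in> F1 \<or> h \<in> F2" using that F_def by simp
    then have "\<exists>a b. a \<noteq> 0 \<and> h = {x. a \<bullet> x \<le> b}"
    proof
      assume "h \<in> F1" then show ?thesis using F1(3) by blast
    next
      assume "h \<in> F2" then show ?thesis using F2(3) by blast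
    qed
    then obtain a b where "h = {x. a \<bullet> x \<le> b}" by blast
    then have "\<exists>ab. h = {y. fst ab \<bullet> y \<le> snd ab}" by (intro exI[of _ "(a,b)"]) simp
    then show ?thesis unfolding nrm_def by (rule someI_ex)
  qed
  have finF: "finite F" using F1 F2 by (simp add: F_def)
  define X where "X = (\<lambda>h. fst (nrm h)) ` {h\<in>F. fst (nrm h) \<bullet> x = snd (nrm h)}"
  have finX: "finite X" unfolding X_def using finF by simp
  define T where "T = (\<Union>n1\<in>ncone P1 x. \<Union>n2\<in>ncone P2 x. {n1 + n2})"
  have cT: "convex_cone T" unfolding T_def by (intro convex_cone_sums convex_cone_ncone)
  have z1: "0 \<in> ncone P1 x" and z2: "0 \<in> ncone P2 x" by (auto simp: ncone_def)
  have XT: "X \<subseteq> T"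
  proof
    fix a assume "a \<in> X"
    then obtain h where h: "h \<in> F" "a = fst (nrm h)" "fst (nrm h) \<bullet> x = snd (nrm h)"
      unfolding X_def by blast
    have hh: "h = {y. a \<bullet> y \<le> a \<bullet> x}" using nrm[OF h(1)] h by simp
    show "a \<in> T"
    proof (cases "h \<in> F1")
      case True
      then have "P1 \<subseteq> h" using F1(2) by blast
      then have "a \<in> ncone P1 x" using hh by (auto simp: ncone_def inner_diff_right)
      then show ?thesis unfolding T_def using z2 by force
    next
      case False
      then have "h \<in> F2" using h(1) F_def by blast
      then have "P2 \<subseteq> h" using F2(2) by blast
      then have "a \<in> ncone P2 x" using hh by (auto simp: ncone_def inner_diff_right)
      then show ?thesis unfolding T_def using z1 by force
    qed
  qed
  define K where "K = convex_cone hull X"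
  have KT: "K \<subseteq> T" unfolding K_def using XT cT by (rule hull_minimal)
  have "-g \<in> K"
  proof (rule ccontr)
    assume ng: "-g \<notin> K"
    have clK: "closed K" unfolding K_def
      by (intro polyhedron_imp_closed polyhedron_convex_cone_hull finX)
    have cvK: "convex K" unfolding K_def by (rule convex_convex_cone_hull)
    obtain c \<beta> where c1: "c \<bullet> (-g) < \<beta>" and c2: "\<forall>k\<in>K. \<beta> < c \<bullet> k"
      using separating_hyperplane_closed_point[OF cvK clK ng] by blast
    have "0 \<in> K" unfolding K_def by (rule convex_cone_hull_contains_0)
    then have b0: "\<beta> < 0" using c2 by force
    have cK: "0 \<le> c \<bullet> k" if "k \<in> K" for k
    proof (rule ccontr)
      assume "\<not> 0 \<le> c \<bullet> k"
      then have neg: "c \<bullet> k < 0" by simp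
      have "(\<beta> / (c \<bullet> k)) *\<^sub>R k \<in> K"
        using conic_convex_cone_hull[of X] that b0 neg unfolding K_def
        by (intro conicD) (auto simp: divide_nonpos_neg)
      then have "\<beta> < c \<bullet> ((\<beta> / (c \<bullet> k)) *\<^sub>R k)" using c2 by blast
      then show False using neg by simp
    qed
    define d where "d = -c"
    have gd: "g \<bullet> d < 0" using c1 b0 by (simp add: d_def inner_commute)
    have aX: "a \<bullet> d \<le> 0" if "a \<in> X" for a
      using cK[of a] that hull_subset[of X convex_cone] unfolding K_def d_def
      by (auto simp: inner_commute)
    have "eventually (\<lambda>t. \<forall>h\<in>F. fst (nrm h) \<bullet> (x + t *\<^sub>R d) \<le> snd (nrm h)) (at_right 0)"
    proof (rule eventually_ball_finite[OF finF], rule ballI)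
      fix h assume hF: "h \<in> F"
      have xh: "x \<in> h" using hF x1 x2 F1(2) F2(2) F_def by blast
      then have le: "fst (nrm h) \<bullet> x \<le> snd (nrm h)" using nrm[OF hF] by blast
      show "eventually (\<lambda>t. fst (nrm h) \<bullet> (x + t *\<^sub>R d) \<le> snd (nrm h)) (at_right 0)"
      proof (cases "fst (nrm h) \<bullet> x = snd (nrm h)")
        case True
        then have "fst (nrm h) \<in> X" unfolding X_def using hF by blast
        then have ad: "fst (nrm h) \<bullet> d \<le> 0" by (rule aX)
        show ?thesis
          using eventually_at_right_less[of "0::real"]
        proof (rule eventually_mono)
          fix t :: real assume "0 < t"
          then have "t * (fst (nrm h) \<bullet> d) \<le> 0" using ad by (simp add: mult_nonneg_nonpos)
          then show "fst (nrm h) \<bullet> (x + t *\<^sub>R d) \<le> snd (nrm h)"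
            using True by (simp add: inner_add_right)
        qed
      next
        case False
        then have "0 < snd (nrm h) - fst (nrm h) \<bullet> x" using le by simp
        from ev_small[OF this, of "fst (nrm h) \<bullet> d"]
        show ?thesis
        proof (rule eventually_mono)
          fix t :: real assume "t * (fst (nrm h) \<bullet> d) < snd (nrm h) - fst (nrm h) \<bullet> x"
          then show "fst (nrm h) \<bullet> (x + t *\<^sub>R d) \<le> snd (nrm h)"
            by (simp add: inner_add_right)
        qed
      qed
    qed
    then have ev: "eventually (\<lambda>t. 0 < t \<and> (\<forall>h\<in>F. fst (nrm h) \<bullet> (x + t *\<^sub>R d) \<le> snd (nrm h))) (at_right 0)"
      using eventually_at_right_less[of "0::real"] by (simp add: eventually_conj_iff)
    then obtain t :: real where t: "0 < t" "\<forall>h\<in>F. fst (nrm h) \<bullet> (x + t *\<^sub>R d) \<le> snd (nrm h)"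
      using eventually_happens[OF ev] trivial_limit_at_right_real[of 0] by (auto simp: trivial_limit_def)
    have "x + t *\<^sub>R d \<in> P1 \<inter> P2"
    proof -
      have "x + t *\<^sub>R d \<in> h" if "h \<in> F" for h
        using nrm[OF that] t(2) that by blast
      then show ?thesis using F1(2) F2(2) F_def by blast
    qed
    then have "g \<bullet> x \<le> g \<bullet> (x + t *\<^sub>R d)" using mn by blast
    then have "0 \<le> t * (g \<bullet> d)" by (simp add: inner_add_right)
    then show False using t(1) gd by (simp add: mult_pos_neg zero_le_mult_iff)
  qed
  then have "-g \<in> T" using KT by blast
  then show ?thesis unfolding T_def by blast
qed


definition cvx :: "('a::real_vector \<Rightarrow> ereal) \<Rightarrow> bool" where
  "cvx h \<longleftrightarrow> (\<forall>x y u v. 0 \<le> u \<longrightarrow> 0 \<le> v \<longrightarrow> u + v = 1 \<longrightarrow> h x < \<infinity> \<longrightarrow> h y < \<infinity> \<longrightarrow>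
     h (u *\<^sub>R x + v *\<^sub>R y) \<le> ereal (u * real_of_ereal (h x) + v * real_of_ereal (h y)))"

lemma cvx_dom: 
  assumes "cvx h" shows "convex {x. h x < \<infinity>}"
  unfolding convex_def
proof (intro ballI allI impI)
  fix x y u v assume "x \<in> {x. h x < \<infinity>}" "y \<in> {x. h x < \<infinity>}" "0 \<le> (u::real)" "0 \<le> (v::real)" "u + v = 1"
  then have "h (u *\<^sub>R x + v *\<^sub>R y) \<le> ereal (u * real_of_ereal (h x) + v * real_of_ereal (h y))"
    using assms unfolding cvx_def by blast
  then show "u *\<^sub>R x + v *\<^sub>R y \<in> {x. h x < \<infinity>}" using le_less_trans by fastforce
qed

lemma strict_comb:
  fixes a1 a2 b1 b2 u v :: real
  assumes "a1 < b1" "a2 < b2" "0 \<le> u" "0 \<le> v" "u + v = 1"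
  shows "u * a1 + v * a2 < u * b1 + v * b2"
proof (cases "u = 0")
  case True then show ?thesis using assms by simp
next
  case False
  then have "u * a1 < u * b1" using assms by simp
  moreover have "v * a2 \<le> v * b2" using assms by (simp add: mult_left_mono)
  ultimately show ?thesis by simp
qed

lemma core_step1:
  fixes h :: "'a::euclidean_space \<Rightarrow> ereal"
  assumes cv: "cvx h" and nm: "\<And>x. h x \<noteq> -\<infinity>" and cQ: "convex Q"
    and xsQ: "xs \<in> Q" and xsf: "h xs < \<infinity>" and mn: "\<And>x. x \<in> Q \<Longrightarrow> h xs \<le> h x"
    and x0Q: "x0 \<in> Q" and x0r: "x0 \<in> rel_interior {x. h x < \<infinity>}"
  shows "\<exists>g. (\<forall>x. h x < \<infinity> \<longrightarrow> real_of_ereal (h xs) + g \<bullet> (x - xs) \<le> real_of_ereal (h x))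
           \<and> (\<forall>x\<in>Q \<inter> affine hull {x. h x < \<infinity>}. 0 \<le> g \<bullet> (x - xs))"
proof -
  define D where "D = {x. h x < \<infinity>}"
  define A where "A = affine hull D"
  define hs where "hs = real_of_ereal (h xs)"
  have hsE: "h xs = ereal hs" using xsf nm[of xs] unfolding hs_def by (cases "h xs") auto
  have hE: "h x = ereal (real_of_ereal (h x))" if "x \<in> D" for x
    using that nm[of x] unfolding D_def by (cases "h x") auto
  have DA: "D \<subseteq> A" unfolding A_def by (rule hull_subset)
  have affA: "affine A" unfolding A_def by simp
  have xsD: "xs \<in> D" using xsf D_def by simp
  have x0D: "x0 \<in> D" using x0r rel_interior_subset D_def by blast
  define E1 where "E1 = {(x, t). x \<in> D \<and> real_of_ereal (h x) - hs < t}"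
  define E2 where "E2 = (Q \<inter> A) \<times> {..(0::real)}"
  define S where "S = (\<Union>u\<in>E1. \<Union>v\<in>E2. {u - v})"
  have cE1: "convex E1"
    unfolding convex_def
  proof (intro ballI allI impI)
    fix p q :: "'a \<times> real" and u v :: real
    assume p: "p \<in> E1" and q: "q \<in> E1" and u: "0 \<le> u" and v: "0 \<le> v" and uv: "u + v = 1"
    obtain x1 t1 where p': "p = (x1, t1)" "x1 \<in> D" "real_of_ereal (h x1) - hs < t1"
      using p unfolding E1_def by auto
    obtain x2 t2 where q': "q = (x2, t2)" "x2 \<in> D" "real_of_ereal (h x2) - hs < t2"
      using q unfolding E1_def by auto
    have le: "h (u *\<^sub>R x1 + v *\<^sub>R x2) \<le> ereal (u * real_of_ereal (h x1) + v * real_of_ereal (h x2))"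
      using cv p'(2) q'(2) u v uv unfolding cvx_def D_def by blast
    then have inD: "u *\<^sub>R x1 + v *\<^sub>R x2 \<in> D" unfolding D_def using le_less_trans by fastforce
    have r1: "real_of_ereal (h (u *\<^sub>R x1 + v *\<^sub>R x2)) \<le> u * real_of_ereal (h x1) + v * real_of_ereal (h x2)"
      using le hE[OF inD] by (metis ereal_less_eq(3))
    have r2: "u * (real_of_ereal (h x1) - hs) + v * (real_of_ereal (h x2) - hs) < u * t1 + v * t2"
      using p'(3) q'(3) u v uv by (rule strict_comb)
    have "real_of_ereal (h (u *\<^sub>R x1 + v *\<^sub>R x2)) - hs < u * t1 + v * t2"
    proof -
      have "u * (real_of_ereal (h x1) - hs) + v * (real_of_ereal (h x2) - hs)
          = u * real_of_ereal (h x1) + v * real_of_ereal (h x2) - (u + v) * hs"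
        by (simp add: algebra_simps)
      then show ?thesis using r1 r2 uv by simp
    qed
    then show "u *\<^sub>R p + v *\<^sub>R q \<in> E1"
      using inD unfolding E1_def p'(1) q'(1) by simp
  qed
  have cE2: "convex E2" unfolding E2_def
    using affine_imp_convex[OF affA] by (intro convex_Times convex_Int cQ) auto
  have cS: "convex S" unfolding S_def by (rule convex_differences[OF cE1 cE2])
  have xsA: "xs \<in> A" using xsD DA by blast
  have x0A: "x0 \<in> A" using x0D DA by blast
  have E1m: "(x, t) \<in> E1 \<longleftrightarrow> x \<in> D \<and> real_of_ereal (h x) - hs < t" for x t
    by (simp add: E1_def)
  have E2m: "(x, t) \<in> E2 \<longleftrightarrow> x \<in> Q \<and> x \<in> A \<and> t \<le> 0" for x t
    by (simp add: E2_def)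
  have inS: "p - q \<in> S" if "p \<in> E1" "q \<in> E2" for p q
    unfolding S_def using that by blast
  have "(xs, 1) \<in> E1" "(xs, 0) \<in> E2" using xsD xsQ xsA by (simp_all add: E1m E2m hs_def)
  then have "(xs, 1) - (xs, 0) \<in> S" by (rule inS)
  then have Sne: "S \<noteq> {}" by blast
  have S0: "0 \<notin> S"
  proof
    assume "0 \<in> S"
    then obtain p q where pq: "p \<in> E1" "q \<in> E2" "0 = p - q"
      unfolding S_def by blast
    obtain x1 t1 where p: "p = (x1, t1)" by (cases p)
    obtain x2 t2 where q: "q = (x2, t2)" by (cases q)
    have e1: "(x1, t1) \<in> E1" and e2: "(x2, t2) \<in> E2" using pq p q by auto
    have "x1 = x2" "t1 = t2" using pq(3) p q by (auto simp: zero_prod_def)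
    then have "x1 \<in> Q" "real_of_ereal (h x1) - hs < 0" "x1 \<in> D" using e1 e2 by (auto simp: E1m E2m)
    then have r: "real_of_ereal (h x1) < hs" by simp
    have "h x1 < h xs" by (subst hE[OF \<open>x1 \<in> D\<close>], subst hsE) (simp add: r)
    then show False using mn[OF \<open>x1 \<in> Q\<close>] by simp
  qed
  obtain c where cspan: "c \<in> span S" and cne: "c \<noteq> 0" and csep: "\<And>s. s \<in> S \<Longrightarrow> 0 \<le> c \<bullet> s"
    using separating_hyperplane_set_0_inspan[OF cS Sne S0] by blast
  define a where "a = fst c"
  define \<alpha> where "\<alpha> = snd c"
  have key: "0 \<le> a \<bullet> (x1 - x2) + \<alpha> * (t1 - t2)" if "(x1, t1) \<in> E1" "(x2, t2) \<in> E2" for x1 t1 x2 t2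
  proof -
    have "(x1, t1) - (x2, t2) \<in> S" using that by (rule inS)
    from csep[OF this] show ?thesis by (simp add: a_def \<alpha>_def inner_prod_def)
  qed
  define LA where "LA = (\<lambda>x. x - x0) ` A"
  have subLA: "subspace LA" unfolding LA_def by (rule affine_diffs_subspace_subtract[OF affA x0A])
  have "fst ` S \<subseteq> LA"
  proof
    fix d assume "d \<in> fst ` S"
    then obtain p q where pq: "p \<in> E1" "q \<in> E2" "d = fst (p - q)"
      unfolding S_def by blast
    obtain x1 t1 where p: "p = (x1, t1)" by (cases p)
    obtain x2 t2 where q: "q = (x2, t2)" by (cases q)
    have "d = x1 - x2" using pq p q by simp
    have "x1 \<in> A" "x2 \<in> A" using DA pq p q by (auto simp: E1m E2m)
    then have "x0 + 1 *\<^sub>R (x1 - x2) \<in> A" by (intro mem_affine_3_minus affA x0A)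
    then show "d \<in> LA" unfolding LA_def using \<open>d = x1 - x2\<close> by force
  qed
  then have "span (fst ` S) \<subseteq> LA" using subLA by (rule span_minimal)
  moreover have "a \<in> span (fst ` S)"
    using cspan span_linear_image[OF linear_fst, of S] unfolding a_def by blast
  ultimately have "a \<in> LA" by blast
  then obtain ya where ya: "ya \<in> A" "a = ya - x0" unfolding LA_def by blast
  have al0: "0 \<le> \<alpha>"
  proof -
    have "(xs, 1) \<in> E1" "(xs, 0) \<in> E2" using xsD xsQ xsA by (simp_all add: E1m E2m hs_def)
    from key[OF this] show ?thesis by simp
  qed
  have alne: "\<alpha> \<noteq> 0"
  proof
    assume al: "\<alpha> = 0"
    have a1: "0 \<le> a \<bullet> (x1 - x0)" if "x1 \<in> D" for x1
    proof -
      have "(x1, real_of_ereal (h x1) - hs + 1) \<in> E1" "(x0, 0) \<in> E2"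
        using that x0Q x0A by (simp_all add: E1m E2m)
      from key[OF this] show ?thesis using al by simp
    qed
    obtain e where e: "e > 0" "ball x0 e \<inter> affine hull D \<subseteq> D"
      using x0r unfolding D_def[symmetric] mem_rel_interior_ball by blast
    define \<delta> where "\<delta> = e / (2 * (norm a + 1))"
    have dpos: "\<delta> > 0" using e(1) unfolding \<delta>_def by (intro divide_pos_pos mult_pos_pos) (auto intro: add_nonneg_pos)
    have "x0 + (-\<delta>) *\<^sub>R (ya - x0) \<in> A" by (intro mem_affine_3_minus affA x0A ya(1))
    then have inA: "x0 - \<delta> *\<^sub>R a \<in> A" using ya(2) by simp
    have "norm (\<delta> *\<^sub>R a) < e"
    proof -
      have "norm (\<delta> *\<^sub>R a) = \<delta> * norm a" using dpos by simp
      also have "\<dots> = e * (norm a / (2 * (norm a + 1)))" unfolding \<delta>_def by (simp add: field_simps)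
      also have "\<dots> < e * 1"
      proof (intro mult_strict_left_mono e(1))
        have dp2: "0 < 2 * (norm a + 1)" using norm_ge_zero[of a] by (smt (verit))
        have "norm a < 2 * (norm a + 1)" using norm_ge_zero[of a] by (smt (verit))
        then show "norm a / (2 * (norm a + 1)) < 1" using divide_less_eq_1_pos[OF dp2] by blast
      qed
      finally show ?thesis by simp
    qed
    then have "x0 - \<delta> *\<^sub>R a \<in> ball x0 e" by (simp add: dist_norm)
    then have "x0 - \<delta> *\<^sub>R a \<in> D" using inA e(2) unfolding A_def by blast
    from a1[OF this] have "0 \<le> - \<delta> * (a \<bullet> a)" by (simp add: inner_diff_right)
    then have "a \<bullet> a \<le> 0" using dpos by (simp add: mult_le_0_iff)
    then have "a \<bullet> a = 0" using inner_ge_zero[of a] by linarith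
    then have "a = 0" by simp
    then have "c = 0" using al unfolding a_def \<alpha>_def by (simp add: prod_eq_iff)
    then show False using cne by simp
  qed
  then have alpos: "0 < \<alpha>" using al0 by simp
  define g where "g = - (1 / \<alpha>) *\<^sub>R a"
  have part1: "hs + g \<bullet> (x - xs) \<le> real_of_ereal (h x)" if "h x < \<infinity>" for x
  proof -
    have xD: "x \<in> D" using that D_def by simp
    have "\<forall>\<eta>>0. 0 \<le> a \<bullet> (x - xs) + \<alpha> * (real_of_ereal (h x) - hs + \<eta>)"
    proof (intro allI impI)
      fix \<eta> :: real assume "0 < \<eta>"
      then have "(x, real_of_ereal (h x) - hs + \<eta>) \<in> E1" "(xs, 0) \<in> E2"
        using xD xsQ xsA by (simp_all add: E1m E2m)
      from key[OF this] show "0 \<le> a \<bullet> (x - xs) + \<alpha> * (real_of_ereal (h x) - hs + \<eta>)" by simp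
    qed
    then have "0 \<le> a \<bullet> (x - xs) + \<alpha> * (real_of_ereal (h x) - hs)"
    proof (rule contrapos_pp)
      assume neg: "\<not> 0 \<le> a \<bullet> (x - xs) + \<alpha> * (real_of_ereal (h x) - hs)"
      define \<eta> where "\<eta> = - (a \<bullet> (x - xs) + \<alpha> * (real_of_ereal (h x) - hs)) / (2 * \<alpha>)"
      have "\<eta> > 0" using neg alpos unfolding \<eta>_def by (simp add: divide_pos_pos)
      moreover have "a \<bullet> (x - xs) + \<alpha> * (real_of_ereal (h x) - hs + \<eta>) < 0"
      proof -
        define N where "N = a \<bullet> (x - xs) + \<alpha> * (real_of_ereal (h x) - hs)"
        have "\<alpha> * \<eta> = - N / 2" using alpos unfolding \<eta>_def N_def by (simp add: field_simps)
        moreover have "a \<bullet> (x - xs) + \<alpha> * (real_of_ereal (h x) - hs + \<eta>) = N + \<alpha> * \<eta>"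
          unfolding N_def by (simp add: algebra_simps)
        moreover have "N < 0" using neg unfolding N_def by simp
        ultimately show ?thesis by simp
      qed
      ultimately show "\<not> (\<forall>\<eta>>0. 0 \<le> a \<bullet> (x - xs) + \<alpha> * (real_of_ereal (h x) - hs + \<eta>))"
        by (meson not_le)
    qed
    then have "- a \<bullet> (x - xs) \<le> \<alpha> * (real_of_ereal (h x) - hs)" by simp
    then have "(- a \<bullet> (x - xs)) / \<alpha> \<le> real_of_ereal (h x) - hs"
      by (subst pos_divide_le_eq[OF alpos]) (simp add: mult.commute)
    then show ?thesis unfolding g_def by (simp add: field_simps)
  qed
  have part2: "0 \<le> g \<bullet> (x - xs)" if "x \<in> Q \<inter> A" for x
  proof -
    have "\<forall>\<eta>>0. 0 \<le> a \<bullet> (xs - x) + \<alpha> * \<eta>"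
    proof (intro allI impI)
      fix \<eta> :: real assume "0 < \<eta>"
      then have "(xs, \<eta>) \<in> E1" "(x, 0) \<in> E2"
        using xsD that by (simp_all add: E1m E2m hs_def)
      from key[OF this] show "0 \<le> a \<bullet> (xs - x) + \<alpha> * \<eta>" by simp
    qed
    then have "0 \<le> a \<bullet> (xs - x)"
    proof (rule contrapos_pp)
      assume neg: "\<not> 0 \<le> a \<bullet> (xs - x)"
      define \<eta> where "\<eta> = - (a \<bullet> (xs - x)) / (2 * \<alpha>)"
      have "\<eta> > 0" using neg alpos unfolding \<eta>_def by (intro divide_pos_pos) simp_all
      moreover have "a \<bullet> (xs - x) + \<alpha> * \<eta> < 0"
      proof -
        have "\<alpha> * \<eta> = - (a \<bullet> (xs - x)) / 2" using alpos unfolding \<eta>_def by (simp add: field_simps)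
        then show ?thesis using neg by simp
      qed
      ultimately show "\<not> (\<forall>\<eta>>0. 0 \<le> a \<bullet> (xs - x) + \<alpha> * \<eta>)" by (meson not_le)
    qed
    then have "0 \<le> (a \<bullet> (xs - x)) / \<alpha>" using alpos by (intro divide_nonneg_pos)
    moreover have "g \<bullet> (x - xs) = (a \<bullet> (xs - x)) / \<alpha>" unfolding g_def using alne
      by (simp add: inner_diff_right field_simps)
    ultimately show ?thesis by simp
  qed
  show ?thesis
    using part1 part2 unfolding hs_def A_def D_def by blast
qed

lemma core:
  fixes h :: "'a::euclidean_space \<Rightarrow> ereal"
  assumes cv: "cvx h" and nm: "\<And>x. h x \<noteq> -\<infinity>" and pQ: "polyhedron Q"
    and xsQ: "xs \<in> Q" and xsf: "h xs < \<infinity>" and mn: "\<And>x. x \<in> Q \<Longrightarrow> h xs \<le> h x"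
    and x0Q: "x0 \<in> Q" and x0r: "x0 \<in> rel_interior {x. h x < \<infinity>}"
  shows "\<exists>g. (\<forall>x. h x < \<infinity> \<longrightarrow> real_of_ereal (h xs) + g \<bullet> (x - xs) \<le> real_of_ereal (h x))
           \<and> (\<forall>x\<in>Q. 0 \<le> g \<bullet> (x - xs))"
proof -
  obtain g0 where g1: "\<forall>x. h x < \<infinity> \<longrightarrow> real_of_ereal (h xs) + g0 \<bullet> (x - xs) \<le> real_of_ereal (h x)"
     and g2: "\<forall>x\<in>Q \<inter> affine hull {x. h x < \<infinity>}. 0 \<le> g0 \<bullet> (x - xs)"
    using core_step1[OF cv nm polyhedron_imp_convex[OF pQ] xsQ xsf mn x0Q x0r] by blast
  define A where "A = affine hull {x. h x < \<infinity>}"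
  have affA: "affine A" unfolding A_def by simp
  have inA: "x \<in> A" if "h x < \<infinity>" for x
    unfolding A_def using that hull_subset[of "{x. h x < \<infinity>}" affine] by blast
  have xsA: "xs \<in> A" using inA xsf by blast
  have pA: "polyhedron A" using affA by (rule affine_imp_polyhedron)
  have "\<forall>y\<in>Q \<inter> A. g0 \<bullet> xs \<le> g0 \<bullet> y" using g2 unfolding A_def by (simp add: inner_diff_right)
  from farkas_split[OF pQ pA xsQ xsA this] obtain n1 n2 where
    n: "n1 \<in> ncone Q xs" "n2 \<in> ncone A xs" "-g0 = n1 + n2" by blast
  have n2z: "n2 \<bullet> (x - xs) = 0" if "x \<in> A" for x
  proof -
    have "xs + (-1) *\<^sub>R (x - xs) \<in> A" by (intro mem_affine_3_minus affA xsA that)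
    then have "n2 \<bullet> ((xs + (-1) *\<^sub>R (x - xs)) - xs) \<le> 0" using n(2) unfolding ncone_def by blast
    moreover have "n2 \<bullet> (x - xs) \<le> 0" using n(2) that unfolding ncone_def by blast
    ultimately show ?thesis by (simp add: inner_diff_right)
  qed
  have g0e: "g0 = -n1 - n2" using n(3) by (metis add_uminus_conv_diff minus_add_distrib minus_minus)
  show ?thesis
  proof (intro exI[of _ "-n1"] conjI allI impI ballI)
    fix x assume hx: "h x < \<infinity>"
    have "(-n1) \<bullet> (x - xs) = g0 \<bullet> (x - xs) + n2 \<bullet> (x - xs)" using g0e by (simp add: inner_diff_left)
    then show "real_of_ereal (h xs) + (-n1) \<bullet> (x - xs) \<le> real_of_ereal (h x)"
      using g1 hx n2z[OF inA[OF hx]] by simp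
  next
    fix x assume "x \<in> Q"
    then show "0 \<le> (-n1) \<bullet> (x - xs)" using n(1) unfolding ncone_def by simp
  qed
qed

lemma tr_inner: "(x::real^'n) \<bullet> (transpose (A::real^'n^'m) *v y) = (A *v x) \<bullet> y"
proof -
  have "x \<bullet> (transpose A *v y) = (y v* A) \<bullet> x" by (simp add: transpose_matrix_vector inner_commute)
  also have "\<dots> = y \<bullet> (A *v x)" by (rule dot_lmul_matrix)
  also have "\<dots> = (A *v x) \<bullet> y" by (rule inner_commute)
  finally show ?thesis .
qed

lemma fconj_nm:
  assumes "proper_fun f" shows "fconj f p \<noteq> -\<infinity>"
proof -
  obtain x0 where "f x0 < \<infinity>" using assms unfolding proper_fun_def by blast
  moreover have "f x0 \<noteq> -\<infinity>" using assms unfolding proper_fun_def by blast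
  ultimately obtain r where r: "f x0 = ereal r" by (cases "f x0") auto
  have "ereal (x0 \<bullet> p) - f x0 \<le> fconj f p" unfolding fconj_def by (rule SUP_upper) simp
  then show ?thesis using r by auto
qed

lemma fconj_cvx:
  assumes "proper_fun f" shows "cvx (fconj f)"
  unfolding cvx_def
proof (intro allI impI)
  fix p1 p2 and u v :: real
  assume u: "0 \<le> u" and v: "0 \<le> v" and uv: "u + v = 1"
    and f1: "fconj f p1 < \<infinity>" and f2: "fconj f p2 < \<infinity>"
  define r1 where "r1 = real_of_ereal (fconj f p1)"
  define r2 where "r2 = real_of_ereal (fconj f p2)"
  have e1: "fconj f p1 = ereal r1" using f1 fconj_nm[OF assms, of p1] unfolding r1_def
    by (cases "fconj f p1") auto
  have e2: "fconj f p2 = ereal r2" using f2 fconj_nm[OF assms, of p2] unfolding r2_def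
    by (cases "fconj f p2") auto
  have "(SUP x. ereal (x \<bullet> (u *\<^sub>R p1 + v *\<^sub>R p2)) - f x) \<le> ereal (u * r1 + v * r2)"
  proof (rule SUP_least)
    fix x
    show "ereal (x \<bullet> (u *\<^sub>R p1 + v *\<^sub>R p2)) - f x \<le> ereal (u * r1 + v * r2)"
    proof (cases "f x")
      case (real r)
      have "ereal (x \<bullet> p1) - f x \<le> fconj f p1" unfolding fconj_def by (rule SUP_upper) simp
      then have a1: "x \<bullet> p1 - r \<le> r1" using real e1 by simp
      have "ereal (x \<bullet> p2) - f x \<le> fconj f p2" unfolding fconj_def by (rule SUP_upper) simp
      then have a2: "x \<bullet> p2 - r \<le> r2" using real e2 by simp
      have "x \<bullet> (u *\<^sub>R p1 + v *\<^sub>R p2) - r = u * (x \<bullet> p1) + v * (x \<bullet> p2) - (u + v) * r"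
        using uv by (simp add: inner_add_right)
      also have "\<dots> = u * (x \<bullet> p1 - r) + v * (x \<bullet> p2 - r)" by (simp add: algebra_simps)
      also have "\<dots> \<le> u * r1 + v * r2"
        using a1 a2 u v by (intro add_mono mult_left_mono)
      finally show ?thesis using real by simp
    next
      case PInf then show ?thesis by simp
    next
      case MInf then show ?thesis using assms unfolding proper_fun_def by auto
    qed
  qed
  then show "fconj f (u *\<^sub>R p1 + v *\<^sub>R p2) \<le> ereal (u * real_of_ereal (fconj f p1) + v * real_of_ereal (fconj f p2))"
    unfolding r1_def[symmetric] r2_def[symmetric] by (simp add: fconj_def)
qed

lemma frechet_global:
  assumes cv: "cvx h" and nm: "\<And>x. h x \<noteq> -\<infinity>" and vF: "v \<in> frechet_subdiff h x" and hu: "h u < \<infinity>"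
  shows "real_of_ereal (h x) + v \<bullet> (u - x) \<le> real_of_ereal (h u)"
proof (rule ccontr)
  assume neg: "\<not> ?thesis"
  have hxf: "\<bar>h x\<bar> \<noteq> \<infinity>" and fr: "\<forall>e>0. \<exists>d>0. \<forall>w. norm (w - x) < d \<longrightarrow>
        ereal (real_of_ereal (h x) + v \<bullet> (w - x) - e * norm (w - x)) \<le> h w"
    using vF unfolding frechet_subdiff_def by auto
  define hx where "hx = real_of_ereal (h x)"
  define hu' where "hu' = real_of_ereal (h u)"
  have ex: "h x = ereal hx" using hxf unfolding hx_def by (cases "h x") auto
  have eu: "h u = ereal hu'" using hu nm[of u] unfolding hu'_def by (cases "h u") auto
  define \<delta> where "\<delta> = hx + v \<bullet> (u - x) - hu'"
  have dpos: "\<delta> > 0" using neg unfolding \<delta>_def hx_def hu'_def by simp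
  have "u \<noteq> x"
  proof
    assume "u = x" then have "\<delta> = 0" unfolding \<delta>_def hx_def hu'_def by simp
    then show False using dpos by simp
  qed
  define N where "N = norm (u - x)"
  have Npos: "N > 0" using \<open>u \<noteq> x\<close> unfolding N_def by simp
  define e where "e = \<delta> / (2 * N)"
  have epos: "e > 0" unfolding e_def using dpos Npos by simp
  obtain d where d: "d > 0" "\<forall>w. norm (w - x) < d \<longrightarrow>
        ereal (hx + v \<bullet> (w - x) - e * norm (w - x)) \<le> h w"
    using fr epos unfolding hx_def by blast
  define s where "s = min 1 (d / (2 * N))"
  have spos: "s > 0" unfolding s_def using d(1) Npos by simp
  have s1: "s \<le> 1" unfolding s_def by simp
  have sN: "s * N < d"
  proof -
    have "s * N \<le> (d / (2 * N)) * N" unfolding s_def using Npos by (intro mult_right_mono) auto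
    also have "\<dots> = d / 2" using Npos by simp
    finally show ?thesis using d(1) by simp
  qed
  define w where "w = (1 - s) *\<^sub>R x + s *\<^sub>R u"
  have wx: "w - x = s *\<^sub>R (u - x)" unfolding w_def by (simp add: algebra_simps)
  have nw: "norm (w - x) = s * N" unfolding wx N_def using spos by simp
  have "norm (w - x) < d" using nw sN by simp
  then have "ereal (hx + v \<bullet> (w - x) - e * norm (w - x)) \<le> h w" using d(2) by blast
  moreover have "h w \<le> ereal ((1 - s) * hx + s * hu')"
  proof -
    have "h x < \<infinity>" using ex by simp
    moreover have "0 \<le> 1 - s" "0 \<le> s" "(1 - s) + s = 1" using s1 spos by auto
    ultimately show ?thesis
      using cv hu unfolding cvx_def w_def hx_def hu'_def by blast
  qed
  ultimately have "ereal (hx + v \<bullet> (w - x) - e * norm (w - x)) \<le> ereal ((1 - s) * hx + s * hu')"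
    by (rule order_trans)
  then have ineq: "hx + s * (v \<bullet> (u - x)) - e * (s * N) \<le> (1 - s) * hx + s * hu'"
    using nw wx by simp
  have eN: "e * N = \<delta> / 2" unfolding e_def using Npos by simp
  have "s * \<delta> \<le> s * (e * N)" using ineq unfolding \<delta>_def by (simp add: algebra_simps)
  then have "s * \<delta> \<le> s * (\<delta> / 2)" using eN by simp
  then have "\<delta> \<le> \<delta> / 2" using spos by simp
  then show False using dpos by simp
qed

lemma limiting_global:
  assumes cv: "cvx h" and nm: "\<And>x. h x \<noteq> -\<infinity>" and vL: "v \<in> limiting_subdiff h x"
  shows "h x < \<infinity>" and "\<And>u. h u < \<infinity> \<Longrightarrow> real_of_ereal (h x) + v \<bullet> (u - x) \<le> real_of_ereal (h u)"
proof -
  obtain xs vs where xs: "xs \<longlonglongrightarrow> x" and hxs: "(\<lambda>k. h (xs k)) \<longlonglongrightarrow> h x"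
    and vsF: "\<And>k. vs k \<in> frechet_subdiff h (xs k)" and vs: "vs \<longlonglongrightarrow> v"
    using vL unfolding limiting_subdiff_def by blast
  have fin: "h (xs k) = ereal (real_of_ereal (h (xs k)))" for k
    using vsF[of k] unfolding frechet_subdiff_def by (cases "h (xs k)") auto
  have key: "h x \<le> ereal (real_of_ereal (h u) - v \<bullet> (u - x))" if hu: "h u < \<infinity>" for u
  proof (rule LIMSEQ_le[OF hxs])
    show "(\<lambda>k. ereal (real_of_ereal (h u) - vs k \<bullet> (u - xs k))) \<longlonglongrightarrow> ereal (real_of_ereal (h u) - v \<bullet> (u - x))"
      using xs vs by (intro tendsto_intros)
    show "\<exists>N. \<forall>n\<ge>N. h (xs n) \<le> ereal (real_of_ereal (h u) - vs n \<bullet> (u - xs n))"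
    proof (intro exI allI impI)
      fix n
      have "real_of_ereal (h (xs n)) + vs n \<bullet> (u - xs n) \<le> real_of_ereal (h u)"
        by (rule frechet_global[OF cv nm vsF hu])
      then show "h (xs n) \<le> ereal (real_of_ereal (h u) - vs n \<bullet> (u - xs n))"
        by (subst fin) simp
    qed
  qed
  have "h (xs 0) < \<infinity>" by (subst fin) simp
  from key[OF this] show hxf: "h x < \<infinity>" by (cases "h x") auto
  fix u assume hu: "h u < \<infinity>"
  have ex: "h x = ereal (real_of_ereal (h x))" using hxf nm[of x] by (cases "h x") auto
  from key[OF hu] show "real_of_ereal (h x) + v \<bullet> (u - x) \<le> real_of_ereal (h u)"
    by (subst (asm) ex) simp
qed

lemma global_limiting:
  assumes ex: "h x = ereal r" and sg: "\<And>u. ereal (r + v \<bullet> (u - x)) \<le> h u"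
  shows "v \<in> limiting_subdiff h x"
proof -
  have "v \<in> frechet_subdiff h x"
    unfolding frechet_subdiff_def
  proof (intro CollectI conjI allI impI)
    show "\<bar>h x\<bar> \<noteq> \<infinity>" using ex by simp
    fix e :: real assume "0 < e"
    show "\<exists>d>0. \<forall>u. norm (u - x) < d \<longrightarrow>
             ereal (real_of_ereal (h x) + v \<bullet> (u - x) - e * norm (u - x)) \<le> h u"
    proof (intro exI[of _ 1] conjI allI impI)
      fix u
      have le1: "ereal (r + v \<bullet> (u - x) - e * norm (u - x)) \<le> ereal (r + v \<bullet> (u - x))"
        using \<open>0 < e\<close> by simp
      show "ereal (real_of_ereal (h x) + v \<bullet> (u - x) - e * norm (u - x)) \<le> h u"
        using order_trans[OF le1 sg[of u]] ex by simp
    qed simp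
  qed
  then show ?thesis unfolding limiting_subdiff_def
    by (intro CollectI exI[of _ "\<lambda>k. x"] exI[of _ "\<lambda>k. v"]) auto
qed

lemma psi_local:
  assumes u: "u \<in> subdiff_Psi0 z" and c1: "\<And>i. z$i \<noteq> 0 \<Longrightarrow> \<bar>z'$i - z$i\<bar> < \<bar>z$i\<bar>"
    and c2: "\<And>i. z$i = 0 \<Longrightarrow> \<bar>z'$i\<bar> * \<bar>u$i\<bar> \<le> \<mu>$i"
  shows "Psi0 \<mu> z + u \<bullet> (z' - z) \<le> Psi0 \<mu> z'"
proof -
  have t: "\<mu>$i * (if z$i \<noteq> 0 then 1 else 0) + u$i * (z'$i - z$i) \<le> \<mu>$i * (if z'$i \<noteq> 0 then 1 else 0)" for i
  proof (cases "z$i = 0")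
    case False
    then have "u$i = 0" using u unfolding subdiff_Psi0_def by blast
    moreover have "z'$i \<noteq> 0" using c1[OF False] by auto
    ultimately show ?thesis using False by simp
  next
    case True
    show ?thesis
    proof (cases "z'$i = 0")
      case True2: True
      then show ?thesis using True by simp
    next
      case False
      have "u$i * z'$i \<le> \<bar>z'$i\<bar> * \<bar>u$i\<bar>" by (metis abs_ge_self abs_mult mult.commute)
      then show ?thesis using True False c2[OF True] by simp
    qed
  qed
  have "Psi0 \<mu> z + u \<bullet> (z' - z) = (\<Sum>i\<in>UNIV. \<mu>$i * (if z$i \<noteq> 0 then 1 else 0) + u$i * (z'$i - z$i))"
    unfolding Psi0_def inner_vec_def by (simp add: sum.distrib)
  also have "\<dots> \<le> (\<Sum>i\<in>UNIV. \<mu>$i * (if z'$i \<noteq> 0 then 1 else 0))" by (rule sum_mono) (rule t)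
  also have "\<dots> = Psi0 \<mu> z'" unfolding Psi0_def by simp
  finally show ?thesis .
qed

lemma part_i:
  fixes f :: "real^'n \<Rightarrow> ereal" and g :: "real^'m \<Rightarrow> ereal"
    and A :: "real^'n^'m" and B :: "real^'n^'r" and b \<mu> :: "real^'r"
  assumes pf: "proper_fun f" and pg: "proper_fun g" and mu: "\<forall>i. \<mu> $ i > 0"
    and st: "stationary_D f g A B b (y, z)"
  shows "local_minimizer (Gobj f g A B b \<mu>) (y, z)"
proof -
  define F where "F = fconj f"
  define H where "H = fconj g"
  define p where "p = - (transpose A *v y) - (transpose B *v z)"
  obtain x v u where x: "x \<in> limiting_subdiff F p" and v: "v \<in> limiting_subdiff H y"
     and u: "u \<in> subdiff_Psi0 z" and Ax: "A *v x = v" and Bx: "B *v x = b + u"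
    using st unfolding stationary_D_def F_def H_def p_def by auto
  have cF: "cvx F" "\<And>q. F q \<noteq> -\<infinity>" using fconj_cvx[OF pf] fconj_nm[OF pf] unfolding F_def by auto
  have cH: "cvx H" "\<And>q. H q \<noteq> -\<infinity>" using fconj_cvx[OF pg] fconj_nm[OF pg] unfolding H_def by auto
  have Fp: "F p < \<infinity>" and sF: "\<And>q. F q < \<infinity> \<Longrightarrow> real_of_ereal (F p) + x \<bullet> (q - p) \<le> real_of_ereal (F q)"
    using limiting_global[OF cF(1) cF(2) x] by auto
  have Hy: "H y < \<infinity>" and sH: "\<And>q. H q < \<infinity> \<Longrightarrow> real_of_ereal (H y) + v \<bullet> (q - y) \<le> real_of_ereal (H q)"
    using limiting_global[OF cH(1) cH(2) v] by auto
  define Fr where "Fr = real_of_ereal (F p)"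
  define Hr where "Hr = real_of_ereal (H y)"
  have eF: "F p = ereal Fr" using Fp cF(2)[of p] unfolding Fr_def by (cases "F p") auto
  have eH: "H y = ereal Hr" using Hy cH(2)[of y] unfolding Hr_def by (cases "H y") auto
  have "eventually (\<lambda>e. \<forall>i. (z$i \<noteq> 0 \<longrightarrow> e * 1 < \<bar>z$i\<bar>) \<and> e * norm u < \<mu>$i) (at_right 0)"
  proof (rule eventually_all_finite)
    fix i
    have e2: "eventually (\<lambda>e. e * norm u < \<mu>$i) (at_right 0)" using mu by (intro ev_small) auto
    show "eventually (\<lambda>e. (z$i \<noteq> 0 \<longrightarrow> e * 1 < \<bar>z$i\<bar>) \<and> e * norm u < \<mu>$i) (at_right 0)"
    proof (cases "z$i = 0")
      case True then show ?thesis using e2 by simp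
    next
      case False
      then have "eventually (\<lambda>e. e * 1 < \<bar>z$i\<bar>) (at_right 0)" by (intro ev_small) simp
      then show ?thesis using e2 by (simp add: eventually_conj_iff)
    qed
  qed
  then have ev: "eventually (\<lambda>e. 0 < e \<and> (\<forall>i. (z$i \<noteq> 0 \<longrightarrow> e * 1 < \<bar>z$i\<bar>) \<and> e * norm u < \<mu>$i)) (at_right 0)"
    using eventually_at_right_less[of "0::real"] by (simp add: eventually_conj_iff)
  obtain e where e0: "0 < e" and e: "\<And>i. (z$i \<noteq> 0 \<longrightarrow> e * 1 < \<bar>z$i\<bar>) \<and> e * norm u < \<mu>$i"
    using eventually_happens[OF ev] trivial_limit_at_right_real[of 0] by (auto simp: trivial_limit_def)
  have G: "Gobj f g A B b \<mu> (y, z) = F p + H y + ereal (b \<bullet> z) + ereal (Psi0 \<mu> z)"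
    unfolding Gobj_def Xi_def F_def H_def p_def by simp
  show ?thesis unfolding local_minimizer_def
  proof (intro exI[of _ e] conjI allI impI e0)
    fix w' assume dw: "dist w' (y, z) < e"
    obtain y' z' where w': "w' = (y', z')" by (cases w')
    have dz: "\<bar>z'$i - z$i\<bar> < e" for i
    proof -
      have "\<bar>z'$i - z$i\<bar> \<le> norm (z' - z)" using component_le_norm_cart[of "z' - z" i] by simp
      also have "\<dots> = dist (snd w') (snd (y, z))" using w' by (simp add: dist_norm)
      also have "\<dots> \<le> dist w' (y, z)" by (rule dist_snd_le)
      finally show ?thesis using dw by simp
    qed
    have psi: "Psi0 \<mu> z + u \<bullet> (z' - z) \<le> Psi0 \<mu> z'"
    proof (rule psi_local[OF u])
      fix i assume "z$i \<noteq> 0" then show "\<bar>z'$i - z$i\<bar> < \<bar>z$i\<bar>" using dz[of i] e[of i] by auto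
    next
      fix i assume zi: "z$i = 0"
      have "\<bar>z'$i\<bar> \<le> e" using dz[of i] zi by simp
      moreover have "\<bar>u$i\<bar> \<le> norm u" by (rule component_le_norm_cart)
      ultimately have "\<bar>z'$i\<bar> * \<bar>u$i\<bar> \<le> e * norm u" by (intro mult_mono) auto
      then show "\<bar>z'$i\<bar> * \<bar>u$i\<bar> \<le> \<mu>$i" using e[of i] by simp
    qed
    define p' where "p' = - (transpose A *v y') - (transpose B *v z')"
    have G': "Gobj f g A B b \<mu> w' = F p' + H y' + ereal (b \<bullet> z') + ereal (Psi0 \<mu> z')"
      unfolding Gobj_def Xi_def F_def H_def p'_def w' by simp
    show "Gobj f g A B b \<mu> (y, z) \<le> Gobj f g A B b \<mu> w'"
    proof (cases "F p' < \<infinity> \<and> H y' < \<infinity>")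
      case False
      then have "F p' = \<infinity> \<or> H y' = \<infinity>" by auto
      then have "Gobj f g A B b \<mu> w' = \<infinity>" unfolding G' using cF(2)[of p'] cH(2)[of y'] by auto
      then show ?thesis by simp
    next
      case True
      define Fr' where "Fr' = real_of_ereal (F p')"
      define Hr' where "Hr' = real_of_ereal (H y')"
      have eF': "F p' = ereal Fr'" using True cF(2)[of p'] unfolding Fr'_def by (cases "F p'") auto
      have eH': "H y' = ereal Hr'" using True cH(2)[of y'] unfolding Hr'_def by (cases "H y'") auto
      have i1: "Fr + x \<bullet> (p' - p) \<le> Fr'" using sF[of p'] True unfolding Fr_def Fr'_def by simp
      have i2: "Hr + v \<bullet> (y' - y) \<le> Hr'" using sH[of y'] True unfolding Hr_def Hr'_def by simp
      have "p' - p = - (transpose A *v (y' - y)) - (transpose B *v (z' - z))"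
        unfolding p'_def p_def by (simp add: algebra_simps)
      then have xp: "x \<bullet> (p' - p) = - (v \<bullet> (y' - y)) - (b + u) \<bullet> (z' - z)"
        using tr_inner[of x A] tr_inner[of x B] Ax Bx by (simp add: inner_diff_right)
      have "Fr + Hr + b \<bullet> z + Psi0 \<mu> z \<le> Fr' + Hr' + b \<bullet> z' + Psi0 \<mu> z'"
        using i1 i2 xp psi by (simp add: inner_diff_right inner_add_left)
      then show ?thesis unfolding G G' eF eH eF' eH' by simp
    qed
  qed
qed

lemma polyhedron_vimage_linear:
  fixes L :: "'a::euclidean_space \<Rightarrow> 'b::euclidean_space"
  assumes lin: "linear L" and P: "polyhedron P" shows "polyhedron {x. L x \<in> P}"
proof -
  obtain F where F: "finite F" "P = \<Inter>F" "\<forall>h\<in>F. \<exists>a b. a \<noteq> 0 \<and> h = {x. a \<bullet> x \<le> b}"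
    using P unfolding polyhedron_def by blast
  have eq: "{x. L x \<in> P} = \<Inter>((\<lambda>h. {x. L x \<in> h}) ` F)" using F(2) by auto
  have "polyhedron {x. L x \<in> h}" if "h \<in> F" for h
  proof -
    have "\<exists>a b. a \<noteq> 0 \<and> h = {x. a \<bullet> x \<le> b}" using F(3) that by (rule bspec)
    then obtain a b where "a \<noteq> 0 \<and> h = {x. a \<bullet> x \<le> b}" by blast
    then have h: "h = {x. a \<bullet> x \<le> b}" by (rule conjunct2)
    have ad: "a \<bullet> L x = adjoint L a \<bullet> x" for x
      using adjoint_works[OF lin, of x a] by (simp add: inner_commute)
    have "{x. L x \<in> h} = {x. adjoint L a \<bullet> x \<le> b}" unfolding h using ad by simp
    then show ?thesis by (simp add: polyhedron_halfspace_le)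
  qed
  then show ?thesis unfolding eq using F(1) by (intro polyhedron_Inter) auto
qed

lemma ncone_UNIV: "n \<in> ncone UNIV a \<Longrightarrow> n = 0"
proof -
  assume "n \<in> ncone UNIV a"
  then have "n \<bullet> ((a + n) - a) \<le> 0" unfolding ncone_def by blast
  then have "n \<bullet> n = 0" using inner_ge_zero[of n] by simp
  then show "n = 0" by simp
qed

lemma ncone_Times1:
  assumes n: "n \<in> ncone (P \<times> UNIV) (a, b)" and aP: "a \<in> P"
  shows "snd n = 0" and "fst n \<in> ncone P a"
proof -
  have hb: "fst n \<bullet> (y - a) + snd n \<bullet> (t - b) \<le> 0" if "y \<in> P" for y t
  proof -
    have "(y, t) \<in> P \<times> UNIV" using that by simp
    then have "n \<bullet> ((y, t) - (a, b)) \<le> 0" using n unfolding ncone_def by blast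
    then show ?thesis by (simp add: inner_prod_def)
  qed
  show "fst n \<in> ncone P a" unfolding ncone_def using hb[where t=b] by simp
  have "snd n \<bullet> snd n \<le> 0" using hb[OF aP, where t="b + snd n"] by simp
  then have "snd n \<bullet> snd n = 0" using inner_ge_zero[of "snd n"] by linarith
  then show "snd n = 0" by simp
qed

lemma ncone_Times2:
  assumes n: "n \<in> ncone (UNIV \<times> P) (a, b)" and bP: "b \<in> P"
  shows "fst n = 0" and "snd n \<in> ncone P b"
proof -
  have hb: "fst n \<bullet> (t - a) + snd n \<bullet> (y - b) \<le> 0" if "y \<in> P" for y t
  proof -
    have "(t, y) \<in> UNIV \<times> P" using that by simp
    then have "n \<bullet> ((t, y) - (a, b)) \<le> 0" using n unfolding ncone_def by blast
    then show ?thesis by (simp add: inner_prod_def)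
  qed
  show "snd n \<in> ncone P b" unfolding ncone_def using hb[where t=a] by simp
  have "fst n \<bullet> fst n \<le> 0" using hb[OF bP, where t="a + fst n"] by simp
  then have "fst n \<bullet> fst n = 0" using inner_ge_zero[of "fst n"] by linarith
  then show "fst n = 0" by simp
qed

lemma cvxE:
  assumes "cvx f" "f x = ereal a" "f y = ereal b" "0 \<le> u" "0 \<le> v" "u + v = 1"
  shows "f (u *\<^sub>R x + v *\<^sub>R y) \<le> ereal (u * a + v * b)"
proof -
  have "f x < \<infinity>" "f y < \<infinity>" using assms(2,3) by simp_all
  then have "f (u *\<^sub>R x + v *\<^sub>R y) \<le> ereal (u * real_of_ereal (f x) + v * real_of_ereal (f y))"
    using assms(1,4,5,6) unfolding cvx_def by blast
  then show ?thesis using assms(2,3) by simp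
qed

lemma cvx_add:
  assumes f: "cvx f" and g: "cvx g" and nf: "\<And>x. f x \<noteq> -\<infinity>" and ng: "\<And>x. g x \<noteq> -\<infinity>"
  shows "cvx (\<lambda>x. f x + g x)"
  unfolding cvx_def
proof (intro allI impI)
  fix x y and u v :: real
  assume u: "0 \<le> u" and v: "0 \<le> v" and uv: "u + v = 1" and hx: "f x + g x < \<infinity>" and hy: "f y + g y < \<infinity>"
  obtain a1 where a1: "f x = ereal a1" using hx nf[of x] ng[of x] by (cases "f x"; cases "g x") auto
  obtain b1 where b1: "g x = ereal b1" using hx nf[of x] ng[of x] by (cases "f x"; cases "g x") auto
  obtain a2 where a2: "f y = ereal a2" using hy nf[of y] ng[of y] by (cases "f y"; cases "g y") auto
  obtain b2 where b2: "g y = ereal b2" using hy nf[of y] ng[of y] by (cases "f y"; cases "g y") auto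
  have "f (u *\<^sub>R x + v *\<^sub>R y) \<le> ereal (u * a1 + v * a2)"
    using cvxE[OF f a1 a2 u v uv] .
  moreover have "g (u *\<^sub>R x + v *\<^sub>R y) \<le> ereal (u * b1 + v * b2)"
    using cvxE[OF g b1 b2 u v uv] .
  ultimately have "f (u *\<^sub>R x + v *\<^sub>R y) + g (u *\<^sub>R x + v *\<^sub>R y) \<le> ereal (u * a1 + v * a2) + ereal (u * b1 + v * b2)"
    by (rule add_mono)
  then show "f (u *\<^sub>R x + v *\<^sub>R y) + g (u *\<^sub>R x + v *\<^sub>R y)
      \<le> ereal (u * real_of_ereal (f x + g x) + v * real_of_ereal (f y + g y))"
    using a1 a2 b1 b2 by (simp add: algebra_simps)
qed

lemma cvx_comp:
  assumes f: "cvx f" and L: "linear L" shows "cvx (\<lambda>x. f (L x))"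
  unfolding cvx_def
proof (intro allI impI)
  fix x y and u v :: real
  assume "0 \<le> u" "0 \<le> v" "u + v = 1" "f (L x) < \<infinity>" "f (L y) < \<infinity>"
  then have "f (u *\<^sub>R L x + v *\<^sub>R L y) \<le> ereal (u * real_of_ereal (f (L x)) + v * real_of_ereal (f (L y)))"
    using f unfolding cvx_def by blast
  moreover have "L (u *\<^sub>R x + v *\<^sub>R y) = u *\<^sub>R L x + v *\<^sub>R L y"
    using L by (simp add: linear_add linear_scale)
  ultimately show "f (L (u *\<^sub>R x + v *\<^sub>R y)) \<le> ereal (u * real_of_ereal (f (L x)) + v * real_of_ereal (f (L y)))"
    by simp
qed

lemma cvx_lin:
  fixes l :: "'a::real_vector \<Rightarrow> real"
  assumes L: "linear l" shows "cvx (\<lambda>x. ereal (l x))"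
  unfolding cvx_def using L by (simp add: linear_add linear_scale)

definition Mop :: "real^'n^'m \<Rightarrow> real^'n^'r \<Rightarrow> real^'m \<Rightarrow> real^'r \<Rightarrow> real^'n" where
  "Mop A B y z = - (transpose A *v y) - (transpose B *v z)"

lemma Gobj_eq: "Gobj f g A B b \<mu> (y, z) = fconj f (Mop A B y z) + fconj g y + ereal (b \<bullet> z) + ereal (Psi0 \<mu> z)"
  unfolding Gobj_def Xi_def Mop_def by simp

lemma part_ii_min:
  fixes f :: "real^'n \<Rightarrow> ereal" and g :: "real^'m \<Rightarrow> ereal"
    and A :: "real^'n^'m" and B :: "real^'n^'r" and b \<mu> :: "real^'r"
  assumes pf: "proper_fun f" and pg: "proper_fun g"
    and lm: "local_minimizer (Gobj f g A B b \<mu>) (ys, zs)" and Gf: "Gobj f g A B b \<mu> (ys, zs) < \<infinity>"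
  shows "fconj f (Mop A B ys zs) < \<infinity>" "fconj g ys < \<infinity>"
    "\<And>y z. (\<forall>i. zs$i = 0 \<longrightarrow> z$i = 0) \<Longrightarrow> fconj f (Mop A B y z) < \<infinity> \<Longrightarrow> fconj g y < \<infinity> \<Longrightarrow>
       real_of_ereal (fconj f (Mop A B ys zs)) + real_of_ereal (fconj g ys) + b \<bullet> zs
       \<le> real_of_ereal (fconj f (Mop A B y z)) + real_of_ereal (fconj g y) + b \<bullet> z"
proof -
  define F where "F = fconj f"
  define H where "H = fconj g"
  have cF: "cvx F" "\<And>q. F q \<noteq> -\<infinity>" using fconj_cvx[OF pf] fconj_nm[OF pf] unfolding F_def by auto
  have cH: "cvx H" "\<And>q. H q \<noteq> -\<infinity>" using fconj_cvx[OF pg] fconj_nm[OF pg] unfolding H_def by auto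
  have G: "Gobj f g A B b \<mu> (y, z) = F (Mop A B y z) + H y + ereal (b \<bullet> z) + ereal (Psi0 \<mu> z)" for y z
    unfolding Gobj_eq F_def H_def ..
  have fin: "F (Mop A B ys zs) < \<infinity> \<and> H ys < \<infinity>"
  proof (rule ccontr)
    assume "\<not> ?thesis"
    then have "F (Mop A B ys zs) = \<infinity> \<or> H ys = \<infinity>" by auto
    then have "Gobj f g A B b \<mu> (ys, zs) = \<infinity>" unfolding G using cF(2) cH(2) by auto
    then show False using Gf by simp
  qed
  then show "fconj f (Mop A B ys zs) < \<infinity>" "fconj g ys < \<infinity>" unfolding F_def H_def by auto
  define Fr where "Fr = real_of_ereal (F (Mop A B ys zs))"
  define Hr where "Hr = real_of_ereal (H ys)"
  have eF: "F (Mop A B ys zs) = ereal Fr" using fin cF(2) unfolding Fr_def by (cases "F (Mop A B ys zs)") auto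
  have eH: "H ys = ereal Hr" using fin cH(2) unfolding Hr_def by (cases "H ys") auto
  obtain e where e0: "e > 0" and e: "\<And>w'. dist w' (ys, zs) < e \<Longrightarrow> Gobj f g A B b \<mu> (ys, zs) \<le> Gobj f g A B b \<mu> w'"
    using lm unfolding local_minimizer_def by blast
  fix y z
  assume supp: "\<forall>i. zs$i = 0 \<longrightarrow> z$i = 0" and Fy: "fconj f (Mop A B y z) < \<infinity>" and Hy: "fconj g y < \<infinity>"
  define Fw where "Fw = real_of_ereal (F (Mop A B y z))"
  define Hw where "Hw = real_of_ereal (H y)"
  have eFw: "F (Mop A B y z) = ereal Fw" using Fy cF(2) unfolding Fw_def F_def by (cases "fconj f (Mop A B y z)") auto
  have eHw: "H y = ereal Hw" using Hy cH(2) unfolding Hw_def H_def by (cases "fconj g y") auto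
  define D where "D = dist (y, z) (ys, zs)"
  have "eventually (\<lambda>t. \<forall>i. zs$i \<noteq> 0 \<longrightarrow> t * \<bar>z$i - zs$i\<bar> < \<bar>zs$i\<bar>) (at_right 0)"
  proof (rule eventually_all_finite)
    fix i
    show "eventually (\<lambda>t. zs$i \<noteq> 0 \<longrightarrow> t * \<bar>z$i - zs$i\<bar> < \<bar>zs$i\<bar>) (at_right 0)"
    proof (cases "zs$i = 0")
      case True then show ?thesis by simp
    next
      case False
      then have "eventually (\<lambda>t. t * \<bar>z$i - zs$i\<bar> < \<bar>zs$i\<bar>) (at_right 0)" by (intro ev_small) simp
      then show ?thesis by (rule eventually_mono) simp
    qed
  qed
  moreover have "eventually (\<lambda>t. t * 1 < (1::real)) (at_right 0)" by (intro ev_small) simp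
  moreover have "eventually (\<lambda>t. t * D < e) (at_right 0)" using e0 by (intro ev_small) simp
  ultimately have ev: "eventually (\<lambda>t. 0 < t \<and> t * 1 < 1 \<and> t * D < e \<and> (\<forall>i. zs$i \<noteq> 0 \<longrightarrow> t * \<bar>z$i - zs$i\<bar> < \<bar>zs$i\<bar>)) (at_right 0)"
    using eventually_at_right_less[of "0::real"] by (simp add: eventually_conj_iff)
  obtain t where t0: "0 < t" and t1: "t < 1" and tD: "t * D < e"
    and tz: "\<And>i. zs$i \<noteq> 0 \<Longrightarrow> t * \<bar>z$i - zs$i\<bar> < \<bar>zs$i\<bar>"
    using eventually_happens[OF ev] trivial_limit_at_right_real[of 0] by (auto simp: trivial_limit_def)
  define yt where "yt = (1 - t) *\<^sub>R ys + t *\<^sub>R y"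
  define zt where "zt = (1 - t) *\<^sub>R zs + t *\<^sub>R z"
  have wt: "(yt, zt) = (ys, zs) + t *\<^sub>R ((y, z) - (ys, zs))"
    unfolding yt_def zt_def by (simp add: algebra_simps)
  have "dist (yt, zt) (ys, zs) = norm (t *\<^sub>R ((y, z) - (ys, zs)))"
    unfolding wt dist_norm by (simp only: add_diff_cancel_left')
  also have "\<dots> = \<bar>t\<bar> * norm ((y, z) - (ys, zs))" by (rule norm_scaleR)
  also have "\<dots> = t * D" unfolding D_def dist_norm using t0 by simp
  finally have "dist (yt, zt) (ys, zs) = t * D" .
  then have "Gobj f g A B b \<mu> (ys, zs) \<le> Gobj f g A B b \<mu> (yt, zt)" using tD by (intro e) simp
  moreover have "Psi0 \<mu> zt = Psi0 \<mu> zs"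
    unfolding Psi0_def
  proof (rule sum.cong[OF refl])
    fix i
    have zti: "zt$i = zs$i + t * (z$i - zs$i)" unfolding zt_def by (simp add: algebra_simps)
    show "\<mu> $ i * (if zt $ i \<noteq> 0 then 1 else 0) = \<mu> $ i * (if zs $ i \<noteq> 0 then 1 else 0)"
    proof (cases "zs$i = 0")
      case True then show ?thesis using supp zti by simp
    next
      case False
      have "\<bar>t * (z$i - zs$i)\<bar> < \<bar>zs$i\<bar>" using tz[OF False] t0 by (simp add: abs_mult)
      then have "zt$i \<noteq> 0" unfolding zti by auto
      then show ?thesis using False by simp
    qed
  qed
  moreover have "Mop A B yt zt = (1 - t) *\<^sub>R Mop A B ys zs + t *\<^sub>R Mop A B y z"
    unfolding Mop_def yt_def zt_def by (simp add: algebra_simps)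
  then have "F (Mop A B yt zt) \<le> ereal ((1 - t) * Fr + t * Fw)"
    using cvxE[OF cF(1) eF eFw] t0 t1 by simp
  moreover have "H yt \<le> ereal ((1 - t) * Hr + t * Hw)"
    unfolding yt_def using cvxE[OF cH(1) eH eHw] t0 t1 by simp
  moreover have "b \<bullet> zt = (1 - t) * (b \<bullet> zs) + t * (b \<bullet> z)" unfolding zt_def by (simp add: inner_add_right)
  ultimately have "ereal (Fr + Hr + b \<bullet> zs + Psi0 \<mu> zs)
      \<le> ereal ((1 - t) * Fr + t * Fw) + ereal ((1 - t) * Hr + t * Hw) + ereal ((1 - t) * (b \<bullet> zs) + t * (b \<bullet> z)) + ereal (Psi0 \<mu> zs)"
    unfolding G eF eH
    by (smt (verit) add_right_mono add_mono order_trans plus_ereal.simps(1))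
  then have "Fr + Hr + b \<bullet> zs \<le> (1 - t) * (Fr + Hr + b \<bullet> zs) + t * (Fw + Hw + b \<bullet> z)"
    by (simp add: algebra_simps)
  then have "t * (Fr + Hr + b \<bullet> zs) \<le> t * (Fw + Hw + b \<bullet> z)" by (simp add: algebra_simps)
  then have "Fr + Hr + b \<bullet> zs \<le> Fw + Hw + b \<bullet> z" using t0 by simp
  then show "real_of_ereal (fconj f (Mop A B ys zs)) + real_of_ereal (fconj g ys) + b \<bullet> zs
       \<le> real_of_ereal (fconj f (Mop A B y z)) + real_of_ereal (fconj g y) + b \<bullet> z"
    unfolding Fr_def Hr_def Fw_def Hw_def F_def H_def .
qed

lemma Mop_add: "Mop A B (y1 + y2) (z1 + z2) = Mop A B y1 z1 + Mop A B y2 z2"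
  by (simp add: Mop_def algebra_simps)

lemma Mop_scale: "Mop A B (c *\<^sub>R y) (c *\<^sub>R z) = c *\<^sub>R Mop A B y z"
  by (simp add: Mop_def algebra_simps)

lemma Mop_zero: "Mop A B 0 0 = 0"
  by (simp add: Mop_def)

lemma Mop_inner: "x \<bullet> Mop A B y z = - ((A *v x) \<bullet> y) - ((B *v x) \<bullet> z)"
  by (simp only: Mop_def inner_diff_right inner_minus_right tr_inner)

lemma part_ii:
  fixes f :: "real^'n \<Rightarrow> ereal" and g :: "real^'m \<Rightarrow> ereal"
    and A :: "real^'n^'m" and B :: "real^'n^'r" and b \<mu> :: "real^'r"
  assumes pf: "proper_fun f" and pg: "proper_fun g"
    and lm: "local_minimizer (Gobj f g A B b \<mu>) (ys, zs)" and Gf: "Gobj f g A B b \<mu> (ys, zs) < \<infinity>"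
    and sl: "slater_D f g A B zs"
  shows "stationary_D f g A B b (ys, zs)"
proof -
  define F where "F = fconj f"
  define H where "H = fconj g"
  have cF: "cvx F" "\<And>q. F q \<noteq> -\<infinity>" using fconj_cvx[OF pf] fconj_nm[OF pf] unfolding F_def by auto
  have cH: "cvx H" "\<And>q. H q \<noteq> -\<infinity>" using fconj_cvx[OF pg] fconj_nm[OF pg] unfolding H_def by auto
  note mm = part_ii_min[OF pf pg lm Gf]
  define ps where "ps = Mop A B ys zs"
  have Fs: "F ps < \<infinity>" and Hs: "H ys < \<infinity>" using mm(1,2) unfolding F_def H_def ps_def by auto
  define Fr where "Fr = real_of_ereal (F ps)"
  define Hr where "Hr = real_of_ereal (H ys)"
  have eF: "F ps = ereal Fr" using Fs cF(2) unfolding Fr_def by (cases "F ps") auto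
  have eH: "H ys = ereal Hr" using Hs cH(2) unfolding Hr_def by (cases "H ys") auto
  have mn: "Fr + Hr + b \<bullet> zs \<le> real_of_ereal (F (Mop A B y z)) + real_of_ereal (H y) + b \<bullet> z"
    if "\<forall>i. zs$i = 0 \<longrightarrow> z$i = 0" "F (Mop A B y z) < \<infinity>" "H y < \<infinity>" for y z
    using mm(3)[OF that[unfolded F_def H_def]] unfolding Fr_def Hr_def ps_def F_def H_def .
  define PF where "PF = polyhedral_fun F"
  define PH where "PH = polyhedral_fun H"
  define EF where "EF = (if PF then epi F else UNIV)"
  define EH where "EH = (if PH then epi H else UNIV)"
  define hF :: "((real^'n) \<times> real) \<times> (((real^'m) \<times> real) \<times> (real^'r)) \<Rightarrow> ereal"
    where "hF = (if PF then (\<lambda>\<xi>. ereal (snd (fst \<xi>))) else (\<lambda>\<xi>. F (fst (fst \<xi>))))"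
  define hH :: "((real^'n) \<times> real) \<times> (((real^'m) \<times> real) \<times> (real^'r)) \<Rightarrow> ereal"
    where "hH = (if PH then (\<lambda>\<xi>. ereal (snd (fst (snd \<xi>)))) else (\<lambda>\<xi>. H (fst (fst (snd \<xi>)))))"
  define h where "h \<xi> = hF \<xi> + hH \<xi> + ereal (b \<bullet> snd (snd \<xi>))" for \<xi>
  define Ql :: "(((real^'n) \<times> real) \<times> (((real^'m) \<times> real) \<times> (real^'r))) set"
    where "Ql = {\<xi>. fst (fst \<xi>) = Mop A B (fst (fst (snd \<xi>))) (snd (snd \<xi>)) \<and> (\<forall>i. zs$i = 0 \<longrightarrow> snd (snd \<xi>) $ i = 0)}"
  define QF :: "(((real^'n) \<times> real) \<times> (((real^'m) \<times> real) \<times> (real^'r))) set"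
    where "QF = EF \<times> UNIV"
  define QH :: "(((real^'n) \<times> real) \<times> (((real^'m) \<times> real) \<times> (real^'r))) set"
    where "QH = UNIV \<times> (EH \<times> UNIV)"
  define Q where "Q = Ql \<inter> (QF \<inter> QH)"
  define xs where "xs = ((ps, Fr), ((ys, Hr), zs))"
  have subQl: "subspace Ql"
    unfolding subspace_def Ql_def
    by (auto simp: Mop_zero Mop_add[symmetric] Mop_scale[symmetric])
  have pQl: "polyhedron Ql" using subQl by (intro affine_imp_polyhedron subspace_imp_affine)
  have pEF: "polyhedron EF" unfolding EF_def PF_def polyhedral_fun_def by simp
  have pEH: "polyhedron EH" unfolding EH_def PH_def polyhedral_fun_def by simp
  have pQF: "polyhedron QF"
  proof -
    have "QF = {\<xi>. fst \<xi> \<in> EF}" unfolding QF_def by auto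
    then show ?thesis using polyhedron_vimage_linear[OF linear_fst pEF] by simp
  qed
  have pQH: "polyhedron QH"
  proof -
    have "QH = {\<xi>. fst (snd \<xi>) \<in> EH}" unfolding QH_def by auto
    moreover have "linear (\<lambda>\<xi>::(((real^'n) \<times> real) \<times> (((real^'m) \<times> real) \<times> (real^'r))). fst (snd \<xi>))"
      by (simp add: linear_iff)
    ultimately show ?thesis using polyhedron_vimage_linear[OF _ pEH] by simp
  qed
  have pQ: "polyhedron Q" unfolding Q_def using pQl pQF pQH by simp
  have nmh: "h \<xi> \<noteq> -\<infinity>" for \<xi>
    unfolding h_def hF_def hH_def using cF(2) cH(2) by simp
  have linpF: "linear (\<lambda>\<xi>::((real^'n) \<times> real) \<times> (((real^'m) \<times> real) \<times> (real^'r)). fst (fst \<xi>))"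
    by (simp add: linear_iff)
  have lintF: "linear (\<lambda>\<xi>::((real^'n) \<times> real) \<times> (((real^'m) \<times> real) \<times> (real^'r)). snd (fst \<xi>))"
    by (simp add: linear_iff)
  have linpH: "linear (\<lambda>\<xi>::((real^'n) \<times> real) \<times> (((real^'m) \<times> real) \<times> (real^'r)). fst (fst (snd \<xi>)))"
    by (simp add: linear_iff)
  have lintH: "linear (\<lambda>\<xi>::((real^'n) \<times> real) \<times> (((real^'m) \<times> real) \<times> (real^'r)). snd (fst (snd \<xi>)))"
    by (simp add: linear_iff)
  have linz: "linear (\<lambda>\<xi>::((real^'n) \<times> real) \<times> (((real^'m) \<times> real) \<times> (real^'r)). b \<bullet> snd (snd \<xi>))"
    by (simp add: linear_iff inner_add_right)
  have cvhF: "cvx hF" unfolding hF_def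
    using cvx_lin[OF lintF] cvx_comp[OF cF(1) linpF] by simp
  have cvhH: "cvx hH" unfolding hH_def
    using cvx_lin[OF lintH] cvx_comp[OF cH(1) linpH] by simp
  have nmF: "hF \<xi> \<noteq> -\<infinity>" for \<xi> unfolding hF_def using cF(2) by simp
  have nmH: "hH \<xi> \<noteq> -\<infinity>" for \<xi> unfolding hH_def using cH(2) by simp
  have hl: "h = (\<lambda>\<xi>. (hF \<xi> + hH \<xi>) + ereal (b \<bullet> snd (snd \<xi>)))" by (rule ext) (simp add: h_def)
  have s1: "cvx (\<lambda>\<xi>. hF \<xi> + hH \<xi>)" by (rule cvx_add[OF cvhF cvhH nmF nmH])
  have s3: "hF \<xi> + hH \<xi> \<noteq> -\<infinity>" for \<xi> using nmF[of \<xi>] nmH[of \<xi>] by simp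
  have cvh: "cvx h" unfolding hl by (rule cvx_add[OF s1 cvx_lin[OF linz] s3]) simp
  have xsQl: "xs \<in> Ql" unfolding Ql_def xs_def ps_def by simp
  have xsQF: "xs \<in> QF" unfolding QF_def xs_def EF_def epi_def using eF by simp
  have xsQH: "xs \<in> QH" unfolding QH_def xs_def EH_def epi_def using eH by simp
  have xsQ: "xs \<in> Q" unfolding Q_def using xsQl xsQF xsQH by simp
  have hxs: "h xs = ereal (Fr + Hr + b \<bullet> zs)"
    unfolding h_def hF_def hH_def xs_def using eF eH by simp
  have hform: "h ((p, t), ((y, s), z)) = (if PF then ereal t else F p) + (if PH then ereal s else H y) + ereal (b \<bullet> z)"
    for p t y s z by (simp add: h_def hF_def hH_def)
  have hmin: "h xs \<le> h \<xi>" if \<xi>Q: "\<xi> \<in> Q" for \<xi>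
  proof -
    obtain p t y s z where \<xi>: "\<xi> = ((p, t), ((y, s), z))" by (metis prod.exhaust)
    have Qp: "p = Mop A B y z" "\<forall>i. zs$i = 0 \<longrightarrow> z$i = 0" "(p, t) \<in> EF" "(y, s) \<in> EH"
      using \<xi>Q unfolding \<xi> Q_def Ql_def QF_def QH_def by auto
    show ?thesis
    proof (cases "h \<xi> < \<infinity>")
      case False then show ?thesis by simp
    next
      case True
      have fF: "(if PF then ereal t else F p) < \<infinity>" and fH: "(if PH then ereal s else H y) < \<infinity>"
        using True cF(2)[of p] cH(2)[of y] unfolding \<xi> hform by (auto split: if_splits)
      obtain aF where aF: "(if PF then ereal t else F p) = ereal aF" "F p < \<infinity>" "real_of_ereal (F p) \<le> aF"
      proof (cases PF)
        case True
        then have "F p \<le> ereal t" using Qp(3) unfolding EF_def epi_def by simp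
        moreover have "F p = ereal (real_of_ereal (F p))" using calculation cF(2)[of p] by (cases "F p") auto
        ultimately have "F p < \<infinity>" "real_of_ereal (F p) \<le> t" by (cases "F p"; simp)+
        then show ?thesis using that[of t] True by simp
      next
        case False
        then have "F p = ereal (real_of_ereal (F p))" using fF cF(2)[of p] by (cases "F p") auto
        then have "F p < \<infinity>" by (cases "F p") auto
        then show ?thesis using that[of "real_of_ereal (F p)"] False \<open>F p = ereal (real_of_ereal (F p))\<close> by simp
      qed
      obtain aH where aH: "(if PH then ereal s else H y) = ereal aH" "H y < \<infinity>" "real_of_ereal (H y) \<le> aH"
      proof (cases PH)
        case True
        then have "H y \<le> ereal s" using Qp(4) unfolding EH_def epi_def by simp
        moreover have "H y = ereal (real_of_ereal (H y))" using calculation cH(2)[of y] by (cases "H y") auto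
        ultimately have "H y < \<infinity>" "real_of_ereal (H y) \<le> s" by (cases "H y"; simp)+
        then show ?thesis using that[of s] True by simp
      next
        case False
        then have "H y = ereal (real_of_ereal (H y))" using fH cH(2)[of y] by (cases "H y") auto
        then have "H y < \<infinity>" by (cases "H y") auto
        then show ?thesis using that[of "real_of_ereal (H y)"] False \<open>H y = ereal (real_of_ereal (H y))\<close> by simp
      qed
      have "Fr + Hr + b \<bullet> zs \<le> real_of_ereal (F p) + real_of_ereal (H y) + b \<bullet> z"
        using mn[OF Qp(2)] aF(2) aH(2) Qp(1) by simp
      also have "\<dots> \<le> aF + aH + b \<bullet> z" using aF(3) aH(3) by simp
      finally show ?thesis unfolding hxs \<xi> hform aF(1) aH(1) by simp
    qed
  qed
  obtain y0 z0 where sl1: "Mop A B y0 z0 \<in> (if PF then edom F else rel_interior (edom F))"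
    and sl2: "y0 \<in> (if PH then edom H else rel_interior (edom H))"
    and sl3: "\<forall>i. zs $ i = 0 \<longrightarrow> z0 $ i = 0"
    using sl unfolding slater_D_def Mop_def[symmetric] F_def[symmetric] H_def[symmetric] PF_def PH_def by blast
  define p0 where "p0 = Mop A B y0 z0"
  have Fp0: "F p0 < \<infinity>" using sl1 rel_interior_subset[of "edom F"] unfolding p0_def edom_def
    by (auto split: if_splits)
  have Hy0: "H y0 < \<infinity>" using sl2 rel_interior_subset[of "edom H"] unfolding edom_def
    by (auto split: if_splits)
  define t0 where "t0 = real_of_ereal (F p0)"
  define s0 where "s0 = real_of_ereal (H y0)"
  have et0: "F p0 = ereal t0" using Fp0 cF(2)[of p0] unfolding t0_def by (cases "F p0") auto
  have es0: "H y0 = ereal s0" using Hy0 cH(2)[of y0] unfolding s0_def by (cases "H y0") auto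
  define \<xi>0 where "\<xi>0 = ((p0, t0), ((y0, s0), z0))"
  have x0Q: "\<xi>0 \<in> Q" unfolding Q_def Ql_def QF_def QH_def \<xi>0_def EF_def EH_def epi_def p0_def
    using et0 es0 sl3 unfolding p0_def by simp
  define DF :: "((real^'n) \<times> real) set" where "DF = (if PF then UNIV else edom F \<times> UNIV)"
  define DH :: "((real^'m) \<times> real) set" where "DH = (if PH then UNIV else edom H \<times> UNIV)"
  have domh: "{\<xi>. h \<xi> < \<infinity>} = DF \<times> (DH \<times> UNIV)"
  proof (intro set_eqI)
    fix \<xi> :: "((real^'n) \<times> real) \<times> (((real^'m) \<times> real) \<times> (real^'r))"
    obtain p t y s z where \<xi>: "\<xi> = ((p, t), ((y, s), z))" by (metis prod.exhaust)
    show "\<xi> \<in> {\<xi>. h \<xi> < \<infinity>} \<longleftrightarrow> \<xi> \<in> DF \<times> (DH \<times> UNIV)"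
      unfolding \<xi> DF_def DH_def edom_def using cF(2)[of p] cH(2)[of y]
      by (cases "F p"; cases "H y"; simp add: hform)
  qed
  have cDF: "convex DF" unfolding DF_def using cvx_dom[OF cF(1)] unfolding edom_def
    by (simp add: convex_Times)
  have cDH: "convex DH" unfolding DH_def using cvx_dom[OF cH(1)] unfolding edom_def
    by (simp add: convex_Times)
  have rDF: "rel_interior DF = (if PF then UNIV else rel_interior (edom F) \<times> UNIV)"
    unfolding DF_def using cvx_dom[OF cF(1)] unfolding edom_def by (simp add: rel_interior_Times)
  have rDH: "rel_interior DH = (if PH then UNIV else rel_interior (edom H) \<times> UNIV)"
    unfolding DH_def using cvx_dom[OF cH(1)] unfolding edom_def by (simp add: rel_interior_Times)
  have "rel_interior {\<xi>. h \<xi> < \<infinity>} = rel_interior DF \<times> (rel_interior DH \<times> UNIV)"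
    unfolding domh using cDF cDH by (simp add: rel_interior_Times convex_Times)
  then have x0r: "\<xi>0 \<in> rel_interior {\<xi>. h \<xi> < \<infinity>}"
    unfolding \<xi>0_def rDF rDH using sl1 sl2 unfolding p0_def by (auto split: if_splits)
  have hxsf: "h xs < \<infinity>" using hxs by simp
  from core[OF cvh nmh pQ xsQ hxsf hmin x0Q x0r] obtain g where
    S1: "\<forall>\<xi>. h \<xi> < \<infinity> \<longrightarrow> real_of_ereal (h xs) + g \<bullet> (\<xi> - xs) \<le> real_of_ereal (h \<xi>)"
    and S2: "\<forall>\<xi>\<in>Q. 0 \<le> g \<bullet> (\<xi> - xs)" by blast
  have xsQFH: "xs \<in> QF \<inter> QH" using xsQF xsQH by simp
  have pQFH: "polyhedron (QF \<inter> QH)" using pQF pQH by simp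
  have m1: "\<forall>y\<in>Ql \<inter> (QF \<inter> QH). g \<bullet> xs \<le> g \<bullet> y" using S2 unfolding Q_def by (auto simp: inner_diff_right)
  obtain nl n2 where nl: "nl \<in> ncone Ql xs" and n2: "n2 \<in> ncone (QF \<inter> QH) xs" and gn: "-g = nl + n2"
    using farkas_split[OF pQl pQFH xsQl xsQFH m1] by blast
  have m2: "\<forall>y\<in>QF \<inter> QH. (-n2) \<bullet> xs \<le> (-n2) \<bullet> y" using n2 unfolding ncone_def by (auto simp: inner_diff_right)
  obtain nF nH where nF: "nF \<in> ncone QF xs" and nH: "nH \<in> ncone QH xs" and n2e: "-(-n2) = nF + nH"
    using farkas_split[OF pQF pQH xsQF xsQH m2] by blast
  have "n2 = nF + nH" using n2e by simp
  then have gsum: "g = -(nl + nF + nH)" using gn by (metis add.assoc minus_minus)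
  have xsE: "(ps, Fr) \<in> EF" using xsQF unfolding QF_def xs_def by simp
  have nF1: "snd nF = 0" and nF2: "fst nF \<in> ncone EF (ps, Fr)"
    using ncone_Times1[OF nF[unfolded QF_def xs_def] xsE] by auto
  have xsEH: "((ys, Hr), zs) \<in> EH \<times> UNIV" using xsQH unfolding QH_def xs_def by simp
  have nH1: "fst nH = 0" and nH2: "snd nH \<in> ncone (EH \<times> UNIV) ((ys, Hr), zs)"
    using ncone_Times2[OF nH[unfolded QH_def xs_def] xsEH] by auto
  have xsEH': "(ys, Hr) \<in> EH" using xsEH by simp
  have nH3: "snd (snd nH) = 0" and nH4: "fst (snd nH) \<in> ncone EH (ys, Hr)"
    using ncone_Times1[OF nH2 xsEH'] by auto
  have nlo: "nl \<bullet> d = 0" if "d \<in> Ql" for d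
  proof -
    have "xs + d \<in> Ql" "xs + (-1) *\<^sub>R d \<in> Ql" using subQl xsQl that
      by (auto intro: subspace_add subspace_scale subspace_diff)
    then have "nl \<bullet> ((xs + d) - xs) \<le> 0" "nl \<bullet> ((xs + (-1) *\<^sub>R d) - xs) \<le> 0"
      using nl unfolding ncone_def by blast+
    then show ?thesis by simp
  qed
  have L1: "snd (fst nl) = 0"
  proof -
    have "((0, 1), ((0, 0), 0)) \<in> Ql" unfolding Ql_def by (simp add: Mop_zero)
    from nlo[OF this] show ?thesis by (simp add: inner_prod_def)
  qed
  have L2: "snd (fst (snd nl)) = 0"
  proof -
    have "((0, 0), ((0, 1), 0)) \<in> Ql" unfolding Ql_def by (simp add: Mop_zero)
    from nlo[OF this] show ?thesis by (simp add: inner_prod_def)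
  qed
  have L3: "fst (fst nl) \<bullet> Mop A B y z + fst (fst (snd nl)) \<bullet> y + snd (snd nl) \<bullet> z = 0"
    if "\<forall>i. zs$i = 0 \<longrightarrow> z$i = 0" for y z
  proof -
    have "((Mop A B y z, 0), ((y, 0), z)) \<in> Ql" unfolding Ql_def using that by simp
    from nlo[OF this] show ?thesis by (simp add: inner_prod_def)
  qed
  have hxsr: "real_of_ereal (h xs) = Fr + Hr + b \<bullet> zs" using hxs by simp
  have S1': "Fr + Hr + b \<bullet> zs + g \<bullet> (\<xi> - xs) \<le> real_of_ereal (h \<xi>)" if "h \<xi> < \<infinity>" for \<xi>
  proof -
    have "real_of_ereal (h xs) + g \<bullet> (\<xi> - xs) \<le> real_of_ereal (h \<xi>)" using S1 that by blast
    then show ?thesis using hxsr by simp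
  qed
  have eFi: "(if PF then ereal Fr else F ps) = ereal Fr" using eF by simp
  have eHi: "(if PH then ereal Hr else H ys) = ereal Hr" using eH by simp
  have Zc: "snd (snd g) = b"
  proof -
    define d where "d = snd (snd g) - b"
    have "h ((ps, Fr), ((ys, Hr), zs + d)) = ereal (Fr + Hr + b \<bullet> (zs + d))"
      unfolding hform eFi eHi by simp
    from S1'[of "((ps, Fr), ((ys, Hr), zs + d))"] this
    have "snd (snd g) \<bullet> d \<le> b \<bullet> d" by (simp add: xs_def inner_prod_def inner_add_right)
    then have "d \<bullet> d \<le> 0" unfolding d_def by (simp add: inner_diff_left inner_diff_right inner_commute)
    then have "d \<bullet> d = 0" using inner_ge_zero[of d] by linarith
    then show ?thesis unfolding d_def by simp
  qed
  have Tc: "snd (fst g) = (if PF then 1 else 0)"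
  proof -
    have "snd (fst g) * d \<le> (if PF then d else 0)" for d
    proof -
      have "h ((ps, Fr + d), ((ys, Hr), zs)) = ereal ((if PF then Fr + d else Fr) + Hr + b \<bullet> zs)"
        unfolding hform eHi using eF by simp
      from S1'[of "((ps, Fr + d), ((ys, Hr), zs))"] this
      show ?thesis by (simp add: xs_def inner_prod_def split: if_splits)
    qed
    from this[of 1] this[of "-1"] show ?thesis by (simp split: if_splits)
  qed
  have Tc': "snd (fst (snd g)) = (if PH then 1 else 0)"
  proof -
    have "snd (fst (snd g)) * d \<le> (if PH then d else 0)" for d
    proof -
      have "h ((ps, Fr), ((ys, Hr + d), zs)) = ereal (Fr + (if PH then Hr + d else Hr) + b \<bullet> zs)"
        unfolding hform eFi using eH by simp
      from S1'[of "((ps, Fr), ((ys, Hr + d), zs))"] this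
      show ?thesis by (simp add: xs_def inner_prod_def split: if_splits)
    qed
    from this[of 1] this[of "-1"] show ?thesis by (simp split: if_splits)
  qed
  have Pc: "fst (fst g) = 0" if PF
  proof -
    define d where "d = fst (fst g)"
    have "h ((ps + d, Fr), ((ys, Hr), zs)) = ereal (Fr + Hr + b \<bullet> zs)"
      unfolding hform eHi using that by simp
    from S1'[of "((ps + d, Fr), ((ys, Hr), zs))"] this
    have "fst (fst g) \<bullet> d \<le> 0" by (simp add: xs_def inner_prod_def)
    then have "d \<bullet> d = 0" using inner_ge_zero[of d] unfolding d_def by linarith
    then show ?thesis unfolding d_def by simp
  qed
  have Pc': "fst (fst (snd g)) = 0" if PH
  proof -
    define d where "d = fst (fst (snd g))"
    have "h ((ps, Fr), ((ys + d, Hr), zs)) = ereal (Fr + Hr + b \<bullet> zs)"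
      unfolding hform eFi using that by simp
    from S1'[of "((ps, Fr), ((ys + d, Hr), zs))"] this
    have "fst (fst (snd g)) \<bullet> d \<le> 0" by (simp add: xs_def inner_prod_def)
    then have "d \<bullet> d = 0" using inner_ge_zero[of d] unfolding d_def by linarith
    then show ?thesis unfolding d_def by simp
  qed
  have Pn: "Fr + fst (fst g) \<bullet> (q - ps) \<le> real_of_ereal (F q)" if "\<not> PF" "F q < \<infinity>" for q
  proof -
    have eq: "F q = ereal (real_of_ereal (F q))" using that(2) cF(2)[of q] by (cases "F q") auto
    have "h ((q, Fr), ((ys, Hr), zs)) = ereal (real_of_ereal (F q) + Hr + b \<bullet> zs)"
      unfolding hform eHi using that(1) by (subst eq) simp
    from S1'[of "((q, Fr), ((ys, Hr), zs))"] this
    show ?thesis by (simp add: xs_def inner_prod_def)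
  qed
  have Pn': "Hr + fst (fst (snd g)) \<bullet> (q - ys) \<le> real_of_ereal (H q)" if "\<not> PH" "H q < \<infinity>" for q
  proof -
    have eq: "H q = ereal (real_of_ereal (H q))" using that(2) cH(2)[of q] by (cases "H q") auto
    have "h ((ps, Fr), ((q, Hr), zs)) = ereal (Fr + real_of_ereal (H q) + b \<bullet> zs)"
      unfolding hform eFi using that(1) by (subst eq) simp
    from S1'[of "((ps, Fr), ((q, Hr), zs))"] this
    show ?thesis by (simp add: xs_def inner_prod_def)
  qed
  have cp: "fst (fst g) = - (fst (fst nl) + fst (fst nF))" using gsum nH1 by simp
  have ct: "snd (fst g) = - snd (fst nF)" using gsum nH1 L1 by simp
  have cy: "fst (fst (snd g)) = - (fst (fst (snd nl)) + fst (fst (snd nH)))" using gsum nF1 by simp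
  have cs: "snd (fst (snd g)) = - snd (fst (snd nH))" using gsum nF1 L2 by simp
  have cz: "snd (snd g) = - snd (snd nl)" using gsum nF1 nH3 by simp
  define x where "x = - fst (fst nl)"
  define v where "v = - fst (fst (snd nl))"
  have sgF: "Fr + x \<bullet> (q - ps) \<le> real_of_ereal (F q)" if Fq: "F q < \<infinity>" for q
  proof (cases PF)
    case True
    have xe: "x = fst (fst nF)" using cp Pc[OF True] unfolding x_def by simp
    have te: "snd (fst nF) = -1" using ct Tc True by simp
    have eq: "F q = ereal (real_of_ereal (F q))" using Fq cF(2)[of q] by (cases "F q") auto
    have "F q \<le> ereal (real_of_ereal (F q))" by (rule eq_refl[OF eq])
    then have "(q, real_of_ereal (F q)) \<in> EF" unfolding EF_def epi_def using True by simp
    then have "fst nF \<bullet> ((q, real_of_ereal (F q)) - (ps, Fr)) \<le> 0" using nF2 unfolding ncone_def by blast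
    then show ?thesis using xe te by (simp add: inner_prod_def)
  next
    case False
    then have "EF = UNIV" unfolding EF_def by simp
    then have "fst nF = 0" using nF2 ncone_UNIV by blast
    then have "x = fst (fst g)" using cp unfolding x_def by simp
    then show ?thesis using Pn[OF False Fq] by simp
  qed
  have sgH: "Hr + v \<bullet> (q - ys) \<le> real_of_ereal (H q)" if Hq: "H q < \<infinity>" for q
  proof (cases PH)
    case True
    have ve: "v = fst (fst (snd nH))" using cy Pc'[OF True] unfolding v_def by simp
    have te: "snd (fst (snd nH)) = -1" using cs Tc' True by simp
    have eq: "H q = ereal (real_of_ereal (H q))" using Hq cH(2)[of q] by (cases "H q") auto
    have "H q \<le> ereal (real_of_ereal (H q))" by (rule eq_refl[OF eq])
    then have "(q, real_of_ereal (H q)) \<in> EH" unfolding EH_def epi_def using True by simp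
    then have "fst (snd nH) \<bullet> ((q, real_of_ereal (H q)) - (ys, Hr)) \<le> 0" using nH4 unfolding ncone_def by blast
    then show ?thesis using ve te by (simp add: inner_prod_def)
  next
    case False
    then have "EH = UNIV" unfolding EH_def by simp
    then have "fst (snd nH) = 0" using nH4 ncone_UNIV by blast
    then have "v = fst (fst (snd g))" using cy unfolding v_def by simp
    then show ?thesis using Pn'[OF False Hq] by simp
  qed
  have rel: "(A *v x - v) \<bullet> y + (B *v x - b) \<bullet> z = 0" if "\<forall>i. zs$i = 0 \<longrightarrow> z$i = 0" for y z
  proof -
    have "snd (snd nl) = - b" using cz Zc by simp
    then have "(-x) \<bullet> Mop A B y z + (-v) \<bullet> y + (-b) \<bullet> z = 0"
      using L3[OF that] unfolding x_def v_def by simp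
    then have "- (x \<bullet> Mop A B y z) - v \<bullet> y - b \<bullet> z = 0" by simp
    then show ?thesis unfolding Mop_inner by (simp add: inner_diff_left)
  qed
  have Axv: "A *v x = v"
  proof -
    have "(A *v x - v) \<bullet> (A *v x - v) + (B *v x - b) \<bullet> 0 = 0" by (rule rel) simp
    then show ?thesis by simp
  qed
  define u where "u = B *v x - b"
  have uP: "u \<in> subdiff_Psi0 zs" unfolding subdiff_Psi0_def
  proof (intro CollectI allI impI)
    fix i assume zi: "zs $ i \<noteq> 0"
    have "\<forall>j. zs$j = 0 \<longrightarrow> axis i (1::real) $ j = 0" using zi by (auto simp: axis_def)
    from rel[OF this, of 0] show "u $ i = 0" unfolding u_def by (simp add: inner_axis)
  qed
  have Bxu: "B *v x = b + u" unfolding u_def by simp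
  have xL: "x \<in> limiting_subdiff F ps"
  proof (rule global_limiting[where h=F and x=ps, OF eF])
    fix q show "ereal (Fr + x \<bullet> (q - ps)) \<le> F q"
    proof (cases "F q < \<infinity>")
      case True
      have eq: "F q = ereal (real_of_ereal (F q))" using True cF(2)[of q] by (cases "F q") auto
      show ?thesis using sgF[OF True] by (subst eq) simp
    qed simp
  qed
  have vL: "v \<in> limiting_subdiff H ys"
  proof (rule global_limiting[where h=H and x=ys, OF eH])
    fix q show "ereal (Hr + v \<bullet> (q - ys)) \<le> H q"
    proof (cases "H q < \<infinity>")
      case True
      have eq: "H q = ereal (real_of_ereal (H q))" using True cH(2)[of q] by (cases "H q") auto
      show ?thesis using sgH[OF True] by (subst eq) simp
    qed simp
  qed
  show ?thesis unfolding stationary_D_def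
    using xL vL uP Axv Bxu unfolding F_def H_def ps_def Mop_def by auto
qed

theorem mainTheorem16:
  fixes f :: "real^'n \<Rightarrow> ereal" and g :: "real^'m \<Rightarrow> ereal"
    and A :: "real^'n^'m" and B :: "real^'n^'r" and b \<mu> :: "real^'r"
  assumes "proper_fun f" "lsc_fun f" "convex_fun f"
    and "proper_fun g" "lsc_fun g" "convex_fun g"
    and "\<forall>i. \<mu> $ i > 0"
  shows "(\<forall>w. stationary_D f g A B b w \<longrightarrow> local_minimizer (Gobj f g A B b \<mu>) w)
       \<and> (\<forall>y z. local_minimizer (Gobj f g A B b \<mu>) (y, z) \<and> Gobj f g A B b \<mu> (y, z) < \<infinity>
              \<and> slater_D f g A B z \<longrightarrow> stationary_D f g A B b (y, z))"
proof (intro conjI allI impI)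
  fix w assume st: "stationary_D f g A B b w"
  obtain y z where w: "w = (y, z)" by (cases w)
  show "local_minimizer (Gobj f g A B b \<mu>) w"
    unfolding w by (rule part_i[OF assms(1) assms(4) assms(7) st[unfolded w]])
next
  fix y z
  assume h: "local_minimizer (Gobj f g A B b \<mu>) (y, z) \<and> Gobj f g A B b \<mu> (y, z) < \<infinity> \<and> slater_D f g A B z"
  show "stationary_D f g A B b (y, z)"
    using part_ii[OF assms(1) assms(4)] h by blast
qed

end
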